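(* Let $\mathrm{SNR}>0$ and let $z_1, z_2, \ldots$ be i.i.d. nonnegative random variables (the squared magnitudes $z_i=|h_i|^2$ of block-fading channel coefficients). Fix a transmission rate $R>0$ (bit/s/Hz) and define the random transmission time of a message under HARQ with incremental redundancy as $$T=\min\Big\{M\ge 1: R<\sum_{i=1}^{M}\log_2(1+\mathrm{SNR}\, z_i)\Big\}.$$ Let $T_1,T_2,\ldots$ be i.i.d. copies of $T$ (the durations of successful transmissions of consecutive messages), let $N_t=\max\{k: \sum_{l=1}^{k}T_l<t\}$ be the associated renewal counting process, and for $\theta>0$ define the effective capacity $$C_e(\theta)=-\lim_{t\to\infty}\frac{1}{\theta t}\log_e \mathbb{E}\{e^{-\theta R N_t}\}.$$ Let $\mu_1=\mathbb{E}\{T\}$ and $\sigma^2=\mathrm{var}(T)$ (both depending on $R$). Then, as $\theta\to 0$, $$C_e(\theta)=\frac{R}{\mu_1}-\frac{R^2\sigma^2}{2\mu_1^3}\,\theta+o(\theta),$$ where $o(\theta)$ denotes terms with $\lim_{\theta\to 0} o(\theta)/\theta=0$.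
   Context: The model is the block-fading channel $\mathbf{y}_i=h_i\mathbf{x}_i+\mathbf{n}_i$ with instantaneous capacity $C_i=\log_2(1+\mathrm{SNR}\,z_i)$ in block $i$. In HARQ-IR the receiver accumulates mutual information over blocks and decodes a message at the end of block $M$ exactly when $R<\sum_{i=1}^M C_i$; then a new message starts. $\theta$ is the QoS exponent (decay rate of the buffer overflow probability), and $S_t=RN_t$ is the number of bits served by time $t$. *)

theory Defs
  imports "HOL-Probability.Probability"
begin

definition blockcap :: "real \<Rightarrow> real \<Rightarrow> real" where
  "blockcap SNR zi = log 2 (1 + SNR * zi)"

definition harq_time :: "real \<Rightarrow> real \<Rightarrow> (nat \<Rightarrow> 'a \<Rightarrow> real) \<Rightarrow> 'a \<Rightarrow> nat" where
  "harq_time SNR R z \<omega> =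
     (LEAST M. M \<ge> 1 \<and> R < (\<Sum>i=1..M. blockcap SNR (z i \<omega>)))"

definition renewal_count :: "(nat \<Rightarrow> 'a \<Rightarrow> nat) \<Rightarrow> real \<Rightarrow> 'a \<Rightarrow> nat" where
  "renewal_count Tl t \<omega> = (GREATEST k. real (\<Sum>l=1..k. Tl l \<omega>) < t)"

end

theory Submission
  imports Defs "HOL-Real_Asymp.Real_Asymp"
begin

fun Fc :: "(nat \<Rightarrow> real) \<Rightarrow> nat \<Rightarrow> nat \<Rightarrow> real" where
  "Fc p 0 m = 1"
| "Fc p (Suc k) m = (\<Sum>j\<le>m. p j * Fc p k (m - j))"

definition Aren :: "(nat \<Rightarrow> real) \<Rightarrow> real \<Rightarrow> nat \<Rightarrow> real" where
  "Aren p s m = (\<Sum>k\<le>m. exp (- s * real k) * (Fc p k m - Fc p (Suc k) m))"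

definition Gren :: "(nat \<Rightarrow> real) \<Rightarrow> real \<Rightarrow> nat \<Rightarrow> real" where
  "Gren p s m = (\<Sum>k\<le>m. exp (- s * real k) * Fc p k m)"

lemma exp_mul_split: "exp (a * (x + y)) = exp (a * x) * exp (a * (y::real))"
  by (simp add: distrib_left exp_add)

lemma exp_diff_nat1: "j \<le> m \<Longrightarrow> exp (- l * real (m - j)) = exp (l * real j) * exp (- l * real m)"
proof -
  assume "j \<le> m"
  then have "- l * real (m - j) = l * real j + - l * real m" by (simp add: of_nat_diff algebra_simps)
  then show ?thesis by (simp only: exp_add)
qed

lemma exp_diff_nat2: "j \<le> m \<Longrightarrow> exp (l * real j) * exp (l * real (m - j)) = exp (l * real m)"
proof -
  assume "j \<le> m"
  then have "l * real j + l * real (m - j) = l * real m" by (simp add: of_nat_diff algebra_simps)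
  then show ?thesis by (simp only: exp_add[symmetric])
qed

lemma sum_split0: "(\<Sum>j\<le>(m::nat). f j) = f 0 + (\<Sum>j\<in>{1..m}. f j)"
proof -
  have e: "{..m} = insert 0 {1..m}" by auto
  have "(\<Sum>j\<le>m. f j) = sum f (insert 0 {1..m})" by (simp only: e)
  also have "\<dots> = f 0 + (\<Sum>j\<in>{1..m}. f j)" by (subst sum.insert) auto
  finally show ?thesis .
qed

lemma Fc_zero: assumes "p 0 = 0" shows "m < k \<Longrightarrow> Fc p k m = 0"
proof (induction k arbitrary: m)
  case 0 then show ?case by simp
next
  case (Suc k)
  have "p j * Fc p k (m - j) = 0" if "j \<le> m" for j
  proof (cases "j = 0")
    case True then show ?thesis using assms by simp
  next
    case False
    then have "m - j < k" using Suc.prems that by linarith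
    then show ?thesis using Suc.IH by simp
  qed
  then show ?case by (auto intro!: sum.neutral)
qed

lemma Gren_alt: assumes "p 0 = 0"
  shows "Gren p s m = 1 + (\<Sum>k\<le>m. exp (- s * real (Suc k)) * Fc p (Suc k) m)"
proof -
  have "Gren p s m = (\<Sum>k\<le>Suc m. exp (- s * real k) * Fc p k m)"
    unfolding Gren_def using Fc_zero[where p=p, OF assms, of m "Suc m"] by simp
  also have "\<dots> = 1 + (\<Sum>k\<le>m. exp (- s * real (Suc k)) * Fc p (Suc k) m)"
    by (subst sum.atMost_Suc_shift) simp
  finally show ?thesis .
qed

lemma Aren_Gren: assumes "p 0 = 0"
  shows "Aren p s m = exp s - (exp s - 1) * Gren p s m"
proof -
  have "(\<Sum>k\<le>m. exp (- s * real k) * Fc p (Suc k) m)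
      = exp s * (\<Sum>k\<le>m. exp (- s * real (Suc k)) * Fc p (Suc k) m)"
  proof -
    have e: "exp s * exp (- s * real (Suc k)) = exp (- s * real k)" for k
    proof -
      have "s + - s * real (Suc k) = - s * real k" by (simp add: algebra_simps)
      then show ?thesis by (simp only: exp_add[symmetric])
    qed
    have "exp s * (\<Sum>k\<le>m. exp (- s * real (Suc k)) * Fc p (Suc k) m)
        = (\<Sum>k\<le>m. (exp s * exp (- s * real (Suc k))) * Fc p (Suc k) m)"
      by (simp only: sum_distrib_left mult.assoc)
    also have "\<dots> = (\<Sum>k\<le>m. exp (- s * real k) * Fc p (Suc k) m)"
      by (simp only: e)
    finally show ?thesis by simp
  qed
  also have "\<dots> = exp s * (Gren p s m - 1)" using Gren_alt[where p=p, OF assms, of s m] by simp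
  finally have *: "(\<Sum>k\<le>m. exp (- s * real k) * Fc p (Suc k) m) = exp s * (Gren p s m - 1)" .
  have "Aren p s m = Gren p s m - (\<Sum>k\<le>m. exp (- s * real k) * Fc p (Suc k) m)"
    unfolding Aren_def Gren_def by (simp add: right_diff_distrib sum_subtractf)
  then show ?thesis using * by (simp add: algebra_simps)
qed

lemma Gren_rec: assumes "p 0 = 0"
  shows "Gren p s m = 1 + exp (- s) * (\<Sum>j\<in>{1..m}. p j * Gren p s (m - j))"
proof -
  have "(\<Sum>k\<le>m. exp (- s * real (Suc k)) * Fc p (Suc k) m)
     = (\<Sum>k\<le>m. \<Sum>j\<le>m. exp (- s) * (p j * (exp (- s * real k) * Fc p k (m - j))))"
  proof -
    have e: "exp (- s * real (Suc k)) = exp (-s) * exp (- s * real k)" for k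
      by (simp add: exp_add[symmetric] algebra_simps)
    show ?thesis unfolding Fc.simps e sum_distrib_left by (simp add: ac_simps)
  qed
  also have "\<dots> = (\<Sum>j\<le>m. \<Sum>k\<le>m. exp (- s) * (p j * (exp (- s * real k) * Fc p k (m - j))))"
    by (rule sum.swap)
  also have "\<dots> = exp (- s) * (\<Sum>j\<le>m. p j * (\<Sum>k\<le>m. exp (- s * real k) * Fc p k (m - j)))"
    by (simp add: sum_distrib_left)
  also have "\<dots> = exp (- s) * (\<Sum>j\<in>{1..m}. p j * (\<Sum>k\<le>m. exp (- s * real k) * Fc p k (m - j)))"
    using assms by (simp add: sum_split0[of _ m])
  also have "\<dots> = exp (- s) * (\<Sum>j\<in>{1..m}. p j * Gren p s (m - j))"
  proof -
    have "(\<Sum>k\<le>m. exp (- s * real k) * Fc p k (m - j)) = Gren p s (m - j)" if "j \<in> {1..m}" for j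
      unfolding Gren_def
      by (rule sum.mono_neutral_right) (use Fc_zero[where p=p, OF assms] that in auto)
    then show ?thesis by simp
  qed
  finally show ?thesis using Gren_alt[where p=p, OF assms, of s m] by simp
qed

definition qt :: "(nat \<Rightarrow> real) \<Rightarrow> nat \<Rightarrow> real" where
  "qt p m = 1 - (\<Sum>j\<le>m. p j)"

lemma Aren_rec: assumes "p 0 = 0"
  shows "Aren p s m = qt p m + exp (- s) * (\<Sum>j\<in>{1..m}. p j * Aren p s (m - j))"
proof -
  have s1: "(\<Sum>j\<in>{1..m}. p j) = (\<Sum>j\<le>m. p j)"
    using assms by (simp add: sum_split0[of _ m])
  have "exp (- s) * (\<Sum>j\<in>{1..m}. p j * Aren p s (m - j))
      = exp (- s) * (\<Sum>j\<in>{1..m}. p j * (exp s - (exp s - 1) * Gren p s (m - j)))"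
    using Aren_Gren[where p=p, OF assms] by simp
  also have "\<dots> = exp (-s) * exp s * (\<Sum>j\<in>{1..m}. p j) - (exp s - 1) * (exp (- s) * (\<Sum>j\<in>{1..m}. p j * Gren p s (m - j)))"
  proof -
    have "(\<Sum>j\<in>{1..m}. p j * (exp s - (exp s - 1) * Gren p s (m - j)))
       = exp s * (\<Sum>j\<in>{1..m}. p j) - (exp s - 1) * (\<Sum>j\<in>{1..m}. p j * Gren p s (m - j))"
    proof -
      have "(\<Sum>j\<in>{1..m}. p j * (exp s - (exp s - 1) * Gren p s (m - j)))
         = (\<Sum>j\<in>{1..m}. exp s * p j - (exp s - 1) * (p j * Gren p s (m - j)))"
        by (rule sum.cong) (auto simp: algebra_simps)
      also have "\<dots> = exp s * (\<Sum>j\<in>{1..m}. p j) - (exp s - 1) * (\<Sum>j\<in>{1..m}. p j * Gren p s (m - j))"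
        by (simp only: sum_subtractf sum_distrib_left)
      finally show ?thesis .
    qed
    then show ?thesis by (simp add: right_diff_distrib)
  qed
  also have "\<dots> = (\<Sum>j\<le>m. p j) - (exp s - 1) * (Gren p s m - 1)"
    using Gren_rec[where p=p, OF assms, of s m] s1 by (simp add: exp_minus field_simps)
  finally show ?thesis using Aren_Gren[where p=p, OF assms, of s m] unfolding qt_def by (simp add: algebra_simps)
qed



definition phi :: "(nat \<Rightarrow> real) \<Rightarrow> real \<Rightarrow> real" where
  "phi p l = (\<Sum>n. p n * exp (l * real n))"

lemma qt_nonneg: assumes "\<And>n. 0 \<le> p n" "p sums 1" shows "0 \<le> qt p m"
proof -
  have "(\<Sum>j\<le>m. p j) \<le> 1"
    using sum_le_suminf[of p "{..m}"] assms by (auto simp: sums_iff)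
  then show ?thesis by (simp add: qt_def)
qed

lemma qt_eq: assumes "p sums 1" shows "qt p m = (\<Sum>n. p (n + Suc m))"
proof -
  have "summable p" using assms by (auto simp: sums_iff)
  from suminf_split_initial_segment[OF this, of "Suc m"] assms
  show ?thesis by (simp add: qt_def sums_iff lessThan_Suc_atMost)
qed

lemma Aren_lower_exp:
  assumes p0: "p 0 = 0" and pn: "\<And>n. 0 \<le> p n" and ps: "p sums 1" and s: "0 \<le> s"
  shows "exp (- s * real m) \<le> Aren p s m"
proof (induction m rule: less_induct)
  case (less m)
  have "exp (- s) * (\<Sum>j\<in>{1..m}. p j * Aren p s (m - j))
      \<ge> exp (- s) * (\<Sum>j\<in>{1..m}. p j * exp (- s * real (m - j)))"
  proof -
    have IH: "\<And>j. j \<in> {1..m} \<Longrightarrow> exp (- s * real (m - j)) \<le> Aren p s (m - j)"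
      by (intro less.IH) auto
    show ?thesis by (intro mult_left_mono sum_mono mult_left_mono IH pn) auto
  qed
  also have "exp (- s) * (\<Sum>j\<in>{1..m}. p j * exp (- s * real (m - j)))
      = (\<Sum>j\<in>{1..m}. p j * exp (- s * real (m - j + 1)))"
  proof -
    have "exp (- s) * (p j * exp (- s * real (m - j))) = p j * exp (- s * real (m - j + 1))" for j
    proof -
      have "exp (- s * real (m - j + 1)) = exp (- s * real (m - j)) * exp (- s * 1)"
        unfolding of_nat_add of_nat_1 by (rule exp_mul_split)
      then show ?thesis by simp
    qed
    then have "(\<Sum>j\<in>{1..m}. exp (- s) * (p j * exp (- s * real (m - j)))) = (\<Sum>j\<in>{1..m}. p j * exp (- s * real (m - j + 1)))"
      by (intro sum.cong refl)
    then show ?thesis by (simp only: sum_distrib_left)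
  qed
  also have "\<dots> \<ge> (\<Sum>j\<in>{1..m}. p j * exp (- s * real m))"
  proof -
    have "exp (- s * real m) \<le> exp (- s * real (m - j + 1))" if "j \<in> {1..m}" for j
    proof -
      have "real (m - j + 1) \<le> real m" using that by auto
      then have "s * real (m - j + 1) \<le> s * real m" using s by (rule mult_left_mono)
      then show ?thesis by simp
    qed
    then show ?thesis using pn by (intro sum_mono mult_left_mono) auto
  qed
  finally have *: "exp (- s) * (\<Sum>j\<in>{1..m}. p j * Aren p s (m - j)) \<ge> (\<Sum>j\<in>{1..m}. p j) * exp (- s * real m)"
    by (simp add: sum_distrib_right)
  have q: "qt p m \<ge> qt p m * exp (- s * real m)"
    using qt_nonneg[OF pn ps, of m] s by (intro mult_left_le) auto
  have "exp (- s * real m) = exp (- s * real m) * (qt p m + (\<Sum>j\<in>{1..m}. p j))"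
    using p0 by (simp add: qt_def sum_split0[of p m])
  also have "\<dots> \<le> Aren p s m"
    using Aren_rec[where p=p, OF p0, of s m] q * by (simp add: algebra_simps)
  finally show ?case .
qed

lemma Aren_pos:
  assumes p0: "p 0 = 0" and pn: "\<And>n. 0 \<le> p n" and ps: "p sums 1" and s: "0 \<le> s"
  shows "0 < Aren p s m"
  using Aren_lower_exp[OF assms, of m] by (meson exp_gt_zero less_le_trans)

lemma Aren_upper:
  assumes p0: "p 0 = 0" and pn: "\<And>n. 0 \<le> p n" and ps: "p sums 1"
    and l: "0 \<le> l" and sm: "summable (\<lambda>n. p n * exp (l * real n))" and ph: "phi p l \<le> exp s"
  shows "Aren p s m \<le> exp s * exp (- l * real m)"
proof (induction m rule: less_induct)
  case (less m)
  let ?f = "\<lambda>n. p n * exp (l * real n)"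
  have "exp (- s) * (\<Sum>j\<in>{1..m}. p j * Aren p s (m - j))
      \<le> exp (- s) * (\<Sum>j\<in>{1..m}. p j * (exp s * exp (- l * real (m - j))))"
  proof -
    have IH: "\<And>j. j \<in> {1..m} \<Longrightarrow> Aren p s (m - j) \<le> exp s * exp (- l * real (m - j))"
      by (intro less.IH) auto
    show ?thesis by (intro mult_left_mono sum_mono mult_left_mono IH pn) auto
  qed
  also have "\<dots> = (\<Sum>j\<in>{1..m}. ?f j) * exp (- l * real m)"
  proof -
    have "exp (- s) * (p j * (exp s * exp (- l * real (m - j)))) = p j * exp (l * real j) * exp (- l * real m)"
      if "j \<in> {1..m}" for j
    proof -
      have X: "exp (- l * real (m - j)) = exp (l * real j) * exp (- l * real m)"
        using that by (intro exp_diff_nat1) auto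
      have "exp (- s) * (p j * (exp s * exp (- l * real (m - j)))) = p j * exp (- l * real (m - j)) * (exp (- s) * exp s)"
        by (simp only: ac_simps)
      also have "\<dots> = p j * exp (- l * real (m - j))" by (simp add: exp_minus)
      also have "\<dots> = p j * exp (l * real j) * exp (- l * real m)" by (simp only: X mult.assoc)
      finally show ?thesis .
    qed
    then have "(\<Sum>j\<in>{1..m}. exp (- s) * (p j * (exp s * exp (- l * real (m - j))))) = (\<Sum>j\<in>{1..m}. p j * exp (l * real j) * exp (- l * real m))"
      by (rule sum.cong[OF refl])
    moreover have "exp (- s) * (\<Sum>j\<in>{1..m}. p j * (exp s * exp (- l * real (m - j))))
       = (\<Sum>j\<in>{1..m}. exp (- s) * (p j * (exp s * exp (- l * real (m - j)))))"
      by (simp add: sum_distrib_left)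
    moreover have "(\<Sum>j\<in>{1..m}. ?f j) * exp (- l * real m) = (\<Sum>j\<in>{1..m}. p j * exp (l * real j) * exp (- l * real m))"
      by (simp add: sum_distrib_right)
    ultimately show ?thesis by simp
  qed
  finally have A: "exp (- s) * (\<Sum>j\<in>{1..m}. p j * Aren p s (m - j)) \<le> (\<Sum>j\<in>{1..m}. ?f j) * exp (- l * real m)" .
  have qe: "qt p m = (\<Sum>n. p (n + Suc m))" by (rule qt_eq[OF ps])
  have sp: "summable p" using ps by (auto simp: sums_iff)
  have sm2: "summable (\<lambda>n. ?f (n + Suc m))" using sm by (subst summable_iff_shift)
  have "qt p m * exp (l * real m) = (\<Sum>n. p (n + Suc m) * exp (l * real m))"
    using qe suminf_mult2[OF summable_ignore_initial_segment[OF sp, of "Suc m"]] by simp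
  also have "\<dots> \<le> (\<Sum>n. ?f (n + Suc m))"
    using pn l sm2 summable_ignore_initial_segment[OF sp, of "Suc m"]
    by (intro suminf_le summable_mult2) (auto intro!: mult_left_mono)
  also have "\<dots> = phi p l - (\<Sum>j<Suc m. ?f j)"
    using suminf_split_initial_segment[OF sm, of "Suc m"] unfolding phi_def by simp
  also have "(\<Sum>j<Suc m. ?f j) = (\<Sum>j\<in>{1..m}. ?f j)"
    using p0 by (simp add: lessThan_Suc_atMost sum_split0[of _ m])
  finally have B: "qt p m * exp (l * real m) + (\<Sum>j\<in>{1..m}. ?f j) \<le> exp s" using ph by simp
  have "Aren p s m \<le> qt p m + (\<Sum>j\<in>{1..m}. ?f j) * exp (- l * real m)"
    using Aren_rec[where p=p, OF p0, of s m] A by simp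
  also have "\<dots> = (qt p m * exp (l * real m) + (\<Sum>j\<in>{1..m}. ?f j)) * exp (- l * real m)"
  proof -
    have EE: "exp (l * real m) * exp (- l * real m) = 1" by (simp add: exp_minus)
    have "(qt p m * exp (l * real m) + (\<Sum>j\<in>{1..m}. ?f j)) * exp (- l * real m)
       = qt p m * (exp (l * real m) * exp (- l * real m)) + (\<Sum>j\<in>{1..m}. ?f j) * exp (- l * real m)"
      by (simp only: distrib_right mult.assoc)
    then show ?thesis by (simp only: EE mult_1_right)
  qed
  also have "\<dots> \<le> exp s * exp (- l * real m)"
    using B by (intro mult_right_mono) auto
  finally show ?case .
qed

lemma Aren_lower:
  assumes p0: "p 0 = 0" and pn: "\<And>n. 0 \<le> p n" and ps: "p sums 1" and s: "0 \<le> s"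
    and sm: "summable (\<lambda>n. p n * exp (l * real n))" and ph: "phi p l > exp s"
  shows "\<exists>c>0. \<forall>m. c * exp (- l * real m) \<le> Aren p s m"
proof -
  let ?f = "\<lambda>n. p n * exp (l * real n)"
  have "(\<lambda>J. \<Sum>j<J. ?f j) \<longlonglongrightarrow> phi p l"
    using sm unfolding phi_def by (simp add: summable_LIMSEQ)
  from order_tendstoD(1)[OF this ph] obtain J where J: "exp s < (\<Sum>j<J. ?f j)"
    by (auto simp: eventually_sequentially)
  define u where "u m = Aren p s m * exp (l * real m)" for m
  have upos: "0 < u m" for m using Aren_pos[OF p0 pn ps s] by (simp add: u_def)
  define c where "c = Min (u ` {..J})"
  have c0: "0 < c" unfolding c_def using upos by (subst Min_gr_iff) auto
  have "c \<le> u m" for m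
  proof (induction m rule: less_induct)
    case (less m)
    show ?case
    proof (cases "m \<le> J")
      case True then show ?thesis unfolding c_def by (intro Min_le) auto
    next
      case False
      have "c * exp s \<le> c * (\<Sum>j<J. ?f j)" using J c0 by simp
      also have "\<dots> \<le> c * (\<Sum>j\<le>m. ?f j)"
        using False pn c0 by (intro mult_left_mono sum_mono2) auto
      also have "c * (\<Sum>j\<le>m. ?f j) = c * (\<Sum>j\<in>{1..m}. ?f j)" using p0 by (simp add: sum_split0[of _ m])
      also have "c * (\<Sum>j\<in>{1..m}. ?f j) = (\<Sum>j\<in>{1..m}. c * ?f j)" by (rule sum_distrib_left)
      also have "\<dots> \<le> (\<Sum>j\<in>{1..m}. u (m - j) * ?f j)"
      proof -
        have IH: "\<And>j. j \<in> {1..m} \<Longrightarrow> c \<le> u (m - j)" by (intro less.IH) auto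
        show ?thesis using pn by (intro sum_mono mult_right_mono IH) auto
      qed
      also have "\<dots> = (\<Sum>j\<in>{1..m}. p j * Aren p s (m - j)) * exp (l * real m)"
      proof -
        have "u (m - j) * ?f j = p j * Aren p s (m - j) * exp (l * real m)" if "j \<in> {1..m}" for j
        proof -
          have e: "exp (l * real j) * exp (l * real (m - j)) = exp (l * real m)"
            using that by (intro exp_diff_nat2) auto
          have "u (m - j) * ?f j = p j * Aren p s (m - j) * (exp (l * real j) * exp (l * real (m - j)))"
            unfolding u_def by (simp only: ac_simps)
          then show ?thesis by (simp only: e)
        qed
        then have "(\<Sum>j\<in>{1..m}. u (m - j) * ?f j) = (\<Sum>j\<in>{1..m}. p j * Aren p s (m - j) * exp (l * real m))"
          by (rule sum.cong[OF refl])
        then show ?thesis by (simp add: sum_distrib_right)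
      qed
      finally have "c * exp s \<le> (\<Sum>j\<in>{1..m}. p j * Aren p s (m - j)) * exp (l * real m)" .
      then have "c \<le> exp (- s) * (\<Sum>j\<in>{1..m}. p j * Aren p s (m - j)) * exp (l * real m)"
        by (simp add: exp_minus field_simps)
      also have "\<dots> \<le> u m"
      proof -
        have "exp (- s) * (\<Sum>j\<in>{1..m}. p j * Aren p s (m - j)) \<le> Aren p s m"
          using Aren_rec[where p=p, OF p0, of s m] qt_nonneg[OF pn ps, of m] by linarith
        then show ?thesis unfolding u_def by (intro mult_right_mono) auto
      qed
      finally show ?thesis .
    qed
  qed
  then have "c * exp (- l * real m) \<le> Aren p s m" for m
    unfolding u_def by (simp add: exp_minus field_simps)
  with c0 show ?thesis by blast
qed

lemma exp_taylor3: fixes x :: real shows "\<bar>exp x - 1 - x - x^2/2\<bar> \<le> \<bar>x\<bar>^3 * exp \<bar>x\<bar> / 6"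
proof -
  obtain t where t: "\<bar>t\<bar> \<le> \<bar>x\<bar>" "exp x = (\<Sum>m<3. x^m / fact m) + exp t / fact 3 * x^3"
    using Maclaurin_exp_le[of x 3] by blast
  have s: "(\<Sum>m<3. x^m / fact m) = 1 + x + x^2/2" by (simp add: numeral_3_eq_3 power2_eq_square)
  have f: "(fact 3 :: real) = 6" by (simp add: numeral_3_eq_3)
  have eq: "exp x - 1 - x - x^2/2 = exp t / 6 * x^3" using t(2) s f by simp
  have "\<bar>exp x - 1 - x - x^2/2\<bar> = \<bar>exp t / 6 * x^3\<bar>" by (simp only: eq)
  also have "\<dots> = exp t / 6 * \<bar>x\<bar>^3" by (simp add: abs_mult power_abs)
  also have "\<dots> \<le> exp \<bar>x\<bar> / 6 * \<bar>x\<bar>^3" using t(1) by (intro mult_right_mono divide_right_mono) auto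
  finally show ?thesis by (simp add: mult.commute)
qed

lemma cube_le_exp: fixes a x :: real assumes "0 < a" "0 \<le> x" shows "x^3 \<le> 27 / a^3 * exp (a * x)"
proof -
  have "a * x / 3 \<le> exp (a * x / 3)" using exp_ge_add_one_self[of "a * x / 3"] by linarith
  then have "(a * x / 3)^3 \<le> exp (a * x / 3)^3" using assms by (intro power_mono) auto
  also have "exp (a * x / 3)^3 = exp (a * x)" by (subst exp_of_nat_mult[symmetric]) simp
  finally have *: "(a * x / 3)^3 \<le> exp (a * x)" .
  have "x^3 = 27 / a^3 * (a * x / 3)^3" using assms by (simp add: power_divide power_mult_distrib)
  also have "\<dots> \<le> 27 / a^3 * exp (a * x)" using * assms by (intro mult_left_mono) auto
  finally show ?thesis .
qed

locale tailpmf =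
  fixes p :: "nat \<Rightarrow> real" and C \<rho> :: real
  assumes p0: "p 0 = 0" and pn: "\<And>n. 0 \<le> p n" and ps: "p sums 1"
    and rho0: "0 < \<rho>" and rho1: "\<rho> < 1" and ptail: "\<And>n. p n \<le> C * \<rho> ^ n"
begin

definition dlt :: real where "dlt = - ln \<rho> / 4"

lemma dlt_pos: "0 < dlt"
  using rho0 rho1 unfolding dlt_def by simp

lemma rho_eq: "\<rho> = exp (- 4 * dlt)"
  using rho0 unfolding dlt_def by simp

lemma C_nonneg: "0 \<le> C"
  using ptail[of 0] pn[of 0] by simp

lemma ptail_exp: "p n \<le> C * exp (- 4 * dlt * real n)"
proof -
  have "exp (- 4 * dlt * real n) = exp (- 4 * dlt) ^ n"
    by (subst exp_of_nat_mult[symmetric]) (simp add: mult.commute)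
  also have "\<dots> = \<rho> ^ n" using rho_eq[symmetric] by simp
  finally have "\<rho> ^ n = exp (- 4 * dlt * real n)" by simp
  then show ?thesis using ptail[of n] by simp
qed

lemma summable_geo_exp: "0 < a \<Longrightarrow> summable (\<lambda>n. K * exp (- a * real n))"
proof -
  assume a: "0 < a"
  have "exp (- a * real n) = exp (- a) ^ n" for n
    by (subst exp_of_nat_mult[symmetric]) (simp add: mult.commute)
  moreover have "summable (\<lambda>n. exp (- a) ^ n)" using a by (intro summable_geometric) simp
  ultimately show ?thesis by (intro summable_mult) simp
qed

lemma summable_exp: assumes "l \<le> dlt" shows "summable (\<lambda>n. p n * exp (l * real n))"
proof (rule summable_comparison_test')
  show "summable (\<lambda>n. C * exp (- (3 * dlt) * real n))"
    using dlt_pos by (intro summable_geo_exp) simp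
  fix n :: nat
  have "norm (p n * exp (l * real n)) = p n * exp (l * real n)" using pn[of n] by simp
  also have "\<dots> \<le> C * exp (- 4 * dlt * real n) * exp (dlt * real n)"
    using ptail_exp[of n] pn[of n] assms by (intro mult_mono) (auto simp: mult_right_mono)
  also have "\<dots> = C * exp (- (3 * dlt) * real n)"
    by (simp add: mult.assoc exp_add[symmetric] algebra_simps)
  finally show "norm (p n * exp (l * real n)) \<le> C * exp (- (3 * dlt) * real n)" .
qed

lemma summable_n3: "summable (\<lambda>n. p n * real n ^ 3 * exp (dlt * real n))"
proof (rule summable_comparison_test')
  show "summable (\<lambda>n. C * (27 / dlt^3) * exp (- (2 * dlt) * real n))"
    using dlt_pos by (intro summable_geo_exp) simp
  fix n :: nat
  have "norm (p n * real n ^ 3 * exp (dlt * real n)) = p n * real n ^ 3 * exp (dlt * real n)"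
    using pn[of n] by simp
  also have "\<dots> \<le> (C * exp (- 4 * dlt * real n)) * (27 / dlt^3 * exp (dlt * real n)) * exp (dlt * real n)"
    using ptail_exp[of n] pn[of n] cube_le_exp[OF dlt_pos, of "real n"] C_nonneg
    by (intro mult_right_mono mult_mono) auto
  also have "\<dots> = C * (27 / dlt^3) * exp (- (2 * dlt) * real n)"
  proof -
    have "exp (- 4 * dlt * real n) * exp (dlt * real n) * exp (dlt * real n) = exp (- (2 * dlt) * real n)"
      by (simp add: exp_add[symmetric] algebra_simps)
    then show ?thesis by (simp add: ac_simps)
  qed
  finally show "norm (p n * real n ^ 3 * exp (dlt * real n)) \<le> C * (27 / dlt^3) * exp (- (2 * dlt) * real n)" .
qed

lemma summable_nk: assumes "k \<le> 3" shows "summable (\<lambda>n. p n * real n ^ k)"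
proof (rule summable_comparison_test'[OF summable_n3])
  fix n :: nat
  show "norm (p n * real n ^ k) \<le> p n * real n ^ 3 * exp (dlt * real n)"
  proof (cases "n = 0")
    case True then show ?thesis using p0 by simp
  next
    case False
    have "real n ^ k \<le> real n ^ 3" using False assms by (intro power_increasing) auto
    also have "\<dots> \<le> real n ^ 3 * exp (dlt * real n)"
    proof -
      have "1 \<le> exp (dlt * real n)" using dlt_pos by simp
      from mult_left_mono[OF this, of "real n ^ 3"] show ?thesis by simp
    qed
    finally show ?thesis using pn[of n] by (simp add: abs_mult mult.assoc mult_left_mono)
  qed
qed

definition mu :: real where "mu = (\<Sum>n. p n * real n)"
definition mu2 :: real where "mu2 = (\<Sum>n. p n * real n ^ 2)"
definition sig2 :: real where "sig2 = mu2 - mu^2"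
definition K3 :: real where "K3 = (\<Sum>n. p n * real n ^ 3 * exp (dlt * real n)) / 6"

lemma summable_n1: "summable (\<lambda>n. p n * real n)"
  using summable_nk[of 1] by simp

lemma mu_ge1: "1 \<le> mu"
proof -
  have "p n \<le> p n * real n" for n
  proof (cases n)
    case 0 then show ?thesis using p0 by simp
  next
    case (Suc k)
    then have "1 \<le> real n" by simp
    from mult_left_mono[OF this pn[of n]] show ?thesis by simp
  qed
  then have "suminf p \<le> mu" unfolding mu_def
    using ps summable_n1 by (intro suminf_le) (auto simp: sums_iff)
  then show ?thesis using ps by (simp add: sums_iff)
qed

lemma phi0: "phi p 0 = 1"
  using ps by (simp add: phi_def sums_iff)

lemma phi_mono: assumes "x \<le> y" "y \<le> dlt" shows "phi p x \<le> phi p y"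
  unfolding phi_def using assms pn
  by (intro suminf_le summable_exp mult_left_mono) (auto intro: mult_right_mono)

lemma phi_expand: assumes "\<bar>l\<bar> \<le> dlt"
  shows "\<bar>phi p l - 1 - mu * l - mu2 * l^2 / 2\<bar> \<le> K3 * \<bar>l\<bar>^3"
proof -
  define g where "g n = p n * (exp (l * real n) - 1 - l * real n - (l * real n)^2 / 2)" for n
  define b where "b n = \<bar>l\<bar>^3 * (p n * real n ^ 3 * exp (dlt * real n)) / 6" for n
  have l: "l \<le> dlt" using assms by simp
  have s1: "(\<lambda>n. p n * exp (l * real n)) sums phi p l"
    unfolding phi_def by (rule summable_sums[OF summable_exp[OF l]])
  have s2: "(\<lambda>n. p n * real n * l) sums (mu * l)"
    unfolding mu_def by (rule sums_mult2[OF summable_sums[OF summable_n1]])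
  have s3: "(\<lambda>n. p n * real n ^ 2 * (l^2 / 2)) sums (mu2 * (l^2 / 2))"
    unfolding mu2_def by (rule sums_mult2[OF summable_sums[OF summable_nk]]) simp
  have "(\<lambda>n. p n * exp (l * real n) - p n - p n * real n * l - p n * real n ^ 2 * (l^2 / 2))
      sums (phi p l - 1 - mu * l - mu2 * (l^2 / 2))"
    by (intro sums_diff s1 s2 s3 ps)
  moreover have "(\<lambda>n. p n * exp (l * real n) - p n - p n * real n * l - p n * real n ^ 2 * (l^2 / 2)) = g"
    by (rule ext) (simp add: g_def algebra_simps power_mult_distrib)
  ultimately have gs: "g sums (phi p l - 1 - mu * l - mu2 * l^2 / 2)" by simp
  have gb: "\<bar>g n\<bar> \<le> b n" for n
  proof -
    have "\<bar>g n\<bar> = p n * \<bar>exp (l * real n) - 1 - l * real n - (l * real n)^2 / 2\<bar>"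
      using pn[of n] by (simp add: g_def abs_mult)
    also have "\<dots> \<le> p n * (\<bar>l * real n\<bar>^3 * exp \<bar>l * real n\<bar> / 6)"
      using pn[of n] by (intro mult_left_mono exp_taylor3) auto
    also have "\<dots> \<le> p n * (\<bar>l\<bar>^3 * real n ^ 3 * exp (dlt * real n) / 6)"
    proof -
      have e1: "exp \<bar>l * real n\<bar> \<le> exp (dlt * real n)"
        using assms by (simp add: abs_mult mult_right_mono)
      have e2: "\<bar>l * real n\<bar>^3 = \<bar>l\<bar>^3 * real n ^ 3" by (simp add: abs_mult power_mult_distrib)
      have "\<bar>l * real n\<bar>^3 * exp \<bar>l * real n\<bar> / 6 \<le> \<bar>l\<bar>^3 * real n ^ 3 * exp (dlt * real n) / 6"
        unfolding e2 using e1 by (intro divide_right_mono mult_left_mono) auto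
      then show ?thesis using pn[of n] by (intro mult_left_mono) auto
    qed
    also have "\<dots> = b n" by (simp add: b_def)
    finally show ?thesis .
  qed
  have bs: "summable b" unfolding b_def
    by (intro summable_divide summable_mult summable_n3)
  have ga: "summable (\<lambda>n. \<bar>g n\<bar>)"
    by (rule summable_comparison_test'[OF bs]) (use gb in simp)
  have "\<bar>phi p l - 1 - mu * l - mu2 * l^2 / 2\<bar> = \<bar>suminf g\<bar>" using gs by (simp add: sums_iff)
  also have "\<dots> \<le> (\<Sum>n. \<bar>g n\<bar>)" by (rule summable_rabs[OF ga])
  also have "\<dots> \<le> suminf b" by (rule suminf_le[OF gb ga bs])
  also have "suminf b = K3 * \<bar>l\<bar>^3"
    unfolding b_def K3_def
    by (subst suminf_divide, (intro summable_mult summable_n3), subst suminf_mult, rule summable_n3) simp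
  finally show ?thesis .
qed

end

context tailpmf begin

definition Lf :: "real \<Rightarrow> real" where "Lf s = s / mu - sig2 * s^2 / (2 * mu^3)"

lemma mu_pos: "0 < mu" using mu_ge1 by simp

lemma poly_ident:
  fixes s c :: real
  defines "d \<equiv> c - sig2 / (2 * mu^3)"
  shows "1 + mu * (Lf s + c * s^2) + mu2 * (Lf s + c * s^2)^2 / 2
       = 1 + s + s^2/2 + mu * c * s^2 + s^3 * (mu2 * d / mu + mu2 * d^2 * s / 2)"
proof -
  have m: "mu \<noteq> 0" using mu_pos by simp
  have L: "Lf s + c * s^2 = s / mu + d * s^2" unfolding Lf_def d_def by (simp add: algebra_simps)
  have e1: "mu * (s / mu + d * s^2) = s + mu * d * s^2" using m by (simp add: field_simps)
  have e2: "mu2 * (s / mu + d * s^2)^2 / 2 = mu2 * s^2 / (2 * mu^2) + s^3 * (mu2 * d / mu + mu2 * d^2 * s / 2)"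
    using m by (simp add: field_simps power2_eq_square power3_eq_cube)
  have e3: "mu * d * s^2 + mu2 * s^2 / (2 * mu^2) = s^2/2 + mu * c * s^2"
    using m unfolding d_def sig2_def by (simp add: field_simps power2_eq_square power3_eq_cube)
  show ?thesis unfolding L e1 e2 using e3 by linarith
qed

lemma key_limit: "((\<lambda>s. (phi p (Lf s + c * s^2) - exp s) / s^2) \<longlongrightarrow> mu * c) (at_right 0)"
proof -
  define d where "d = c - sig2 / (2 * mu^3)"
  define lam where "lam s = Lf s + c * s^2" for s
  define E where "E l = phi p l - 1 - mu * l - mu2 * l^2 / 2" for l
  have m: "mu \<noteq> 0" using mu_pos by simp
  have lam_eq: "lam s = s / mu + d * s^2" for s
    unfolding lam_def Lf_def d_def by (simp add: algebra_simps)
  have decomp: "(phi p (lam s) - exp s) / s^2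
      = E (lam s) / s^2 + ((1 + s + s^2/2 - exp s) / s^2 + mu * c + s * (mu2 * d / mu + mu2 * d^2 * s / 2))"
    if "s \<noteq> 0" for s
  proof -
    have "phi p (lam s) - exp s = E (lam s) + (1 + s + s^2/2 - exp s) + mu * c * s^2 + s^3 * (mu2 * d / mu + mu2 * d^2 * s / 2)"
      using poly_ident[of s c] unfolding E_def lam_def d_def by simp
    then show ?thesis using that by (simp add: field_simps power2_eq_square power3_eq_cube)
  qed
  define k where "k = 1 / mu + \<bar>d\<bar>"
  have k0: "0 < k" using mu_pos by (simp add: k_def add_pos_nonneg)
  have A: "((\<lambda>s. E (lam s) / s^2) \<longlongrightarrow> 0) (at_right 0)"
  proof (rule Lim_null_comparison)
    show "((\<lambda>s. K3 * k^3 * s) \<longlongrightarrow> 0) (at_right 0)"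
      by (auto intro!: tendsto_eq_intros)
    have ev: "\<forall>\<^sub>F s in at_right 0. s \<in> {0<..<min 1 (dlt / k)}"
      using dlt_pos k0 by (intro eventually_at_right_real) simp
    show "\<forall>\<^sub>F s in at_right 0. norm (E (lam s) / s^2) \<le> K3 * k^3 * s"
      using ev
    proof eventually_elim
      case (elim s)
      then have s0: "0 < s" "s \<le> 1" "s * k \<le> dlt" using k0 by (auto simp: field_simps)
      have "\<bar>lam s\<bar> \<le> \<bar>s / mu\<bar> + \<bar>d * s^2\<bar>" unfolding lam_eq by (rule abs_triangle_ineq)
      also have "\<dots> = s / mu + \<bar>d\<bar> * s^2" using s0 mu_pos by (simp add: abs_mult)
      also have "\<dots> \<le> s / mu + \<bar>d\<bar> * s" using s0 by (intro add_left_mono mult_left_mono) (auto simp: power2_eq_square mult_le_cancel_left1)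
      also have "\<dots> = k * s" by (simp add: k_def algebra_simps)
      finally have ls: "\<bar>lam s\<bar> \<le> k * s" .
      then have "\<bar>lam s\<bar> \<le> dlt" using s0 by (simp add: mult.commute)
      then have "\<bar>E (lam s)\<bar> \<le> K3 * \<bar>lam s\<bar>^3" unfolding E_def by (rule phi_expand)
      also have "\<dots> \<le> K3 * (k * s)^3"
      proof -
        have "K3 \<ge> 0" unfolding K3_def using pn dlt_pos
          by (intro divide_nonneg_pos suminf_nonneg summable_n3) auto
        then show ?thesis using ls by (intro mult_left_mono power_mono) auto
      qed
      finally have "\<bar>E (lam s)\<bar> \<le> K3 * (k * s)^3" .
      then have "\<bar>E (lam s)\<bar> / s^2 \<le> K3 * (k * s)^3 / s^2" using s0 by (intro divide_right_mono) auto
      also have "K3 * (k * s)^3 / s^2 = K3 * k^3 * s" using s0 by (simp add: power2_eq_square power3_eq_cube field_simps)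
      finally show ?case by (simp add: abs_divide)
    qed
  qed
  have B: "((\<lambda>s::real. (1 + s + s^2/2 - exp s) / s^2) \<longlongrightarrow> 0) (at_right 0)" by real_asymp
  have Cc: "((\<lambda>s. s * (mu2 * d / mu + mu2 * d^2 * s / 2)) \<longlongrightarrow> 0) (at_right 0)"
    by (auto intro!: tendsto_eq_intros)
  have "((\<lambda>s. E (lam s) / s^2 + ((1 + s + s^2/2 - exp s) / s^2 + mu * c + s * (mu2 * d / mu + mu2 * d^2 * s / 2)))
      \<longlongrightarrow> 0 + (0 + mu * c + 0)) (at_right 0)"
    by (intro tendsto_add A B Cc tendsto_const)
  then have lim: "((\<lambda>s. E (lam s) / s^2 + ((1 + s + s^2/2 - exp s) / s^2 + mu * c + s * (mu2 * d / mu + mu2 * d^2 * s / 2)))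
      \<longlongrightarrow> mu * c) (at_right 0)" by simp
  have ev: "\<forall>\<^sub>F s in at_right 0. (phi p (lam s) - exp s) / s^2 = E (lam s) / s^2 + ((1 + s + s^2/2 - exp s) / s^2 + mu * c + s * (mu2 * d / mu + mu2 * d^2 * s / 2))"
    using eventually_at_right_less[of "0::real"] by eventually_elim (simp add: decomp)
  have "((\<lambda>s. (phi p (lam s) - exp s) / s^2) \<longlongrightarrow> mu * c) (at_right 0)"
    using tendsto_cong[OF ev] lim by simp
  then show ?thesis unfolding lam_def .
qed

end

context tailpmf begin

lemma ev_gt: assumes "0 < e"
  shows "\<forall>\<^sub>F s in at_right 0. exp s < phi p (Lf s + e * s^2)"
proof -
  have "0 < mu * e" using mu_pos assms by simp
  from order_tendstoD(1)[OF key_limit[of e] this]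
  have "\<forall>\<^sub>F s in at_right 0. 0 < (phi p (Lf s + e * s^2) - exp s) / s^2" .
  then show ?thesis using eventually_at_right_less[of "0::real"]
    by eventually_elim (simp add: zero_less_divide_iff)
qed

lemma ev_lt: assumes "0 < e"
  shows "\<forall>\<^sub>F s in at_right 0. phi p (Lf s - e * s^2) < exp s"
proof -
  have "mu * (- e) < 0" using mu_pos assms by (simp add: mult_pos_neg)
  from order_tendstoD(2)[OF key_limit[of "- e"] this]
  have "\<forall>\<^sub>F s in at_right 0. (phi p (Lf s + (- e) * s^2) - exp s) / s^2 < 0" .
  then show ?thesis using eventually_at_right_less[of "0::real"]
    by eventually_elim (simp add: divide_less_0_iff)
qed

lemma ev_bounds: assumes "0 < e"
  shows "\<forall>\<^sub>F s in at_right 0. 0 \<le> Lf s - e * s^2 \<and> Lf s + e * s^2 < dlt"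
proof -
  define h where "h s = 1 / mu - (sig2 / (2 * mu^3) + e) * s" for s
  have "(h \<longlongrightarrow> 1 / mu - (sig2 / (2 * mu^3) + e) * 0) (at_right 0)"
    unfolding h_def by (intro tendsto_intros)
  then have "(h \<longlongrightarrow> 1 / mu) (at_right 0)" by simp
  from order_tendstoD(1)[OF this] have e1: "\<forall>\<^sub>F s in at_right 0. 0 < h s" using mu_pos by simp
  have "((\<lambda>s. Lf s + e * s^2) \<longlongrightarrow> 0 / mu - sig2 * 0^2 / (2 * mu^3) + e * 0^2) (at_right 0)"
    unfolding Lf_def by (intro tendsto_intros) (use mu_pos in auto)
  then have "((\<lambda>s. Lf s + e * s^2) \<longlongrightarrow> 0) (at_right 0)" by simp
  from order_tendstoD(2)[OF this dlt_pos] have e2: "\<forall>\<^sub>F s in at_right 0. Lf s + e * s^2 < dlt" .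
  show ?thesis using e1 e2 eventually_at_right_less[of "0::real"]
  proof eventually_elim
    case (elim s)
    have "Lf s - e * s^2 = s * h s" unfolding Lf_def h_def using mu_pos
      by (simp add: field_simps power2_eq_square power3_eq_cube)
    then show ?case using elim by simp
  qed
qed

definition Lam :: "real \<Rightarrow> real" where
  "Lam s = Sup {l. 0 \<le> l \<and> l \<le> dlt \<and> phi p l \<le> exp s}"

lemma Lam_set_ne: "0 \<le> s \<Longrightarrow> 0 \<in> {l. 0 \<le> l \<and> l \<le> dlt \<and> phi p l \<le> exp s}"
  using dlt_pos phi0 by simp

lemma Lam_set_bdd: "bdd_above {l. 0 \<le> l \<and> l \<le> dlt \<and> phi p l \<le> exp s}"
  by (rule bdd_aboveI[of _ dlt]) auto

lemma Lam_ge: "0 \<le> l \<Longrightarrow> l \<le> dlt \<Longrightarrow> phi p l \<le> exp s \<Longrightarrow> l \<le> Lam s"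
  unfolding Lam_def by (rule cSup_upper[OF _ Lam_set_bdd]) simp

lemma Lam_nonneg: "0 \<le> s \<Longrightarrow> 0 \<le> Lam s"
  using Lam_ge[of 0 s] dlt_pos phi0 by simp

lemma Lam_le: assumes "0 \<le> s" "l \<le> dlt" "exp s < phi p l" shows "Lam s \<le> l"
  unfolding Lam_def
proof (rule cSup_least)
  show "{l. 0 \<le> l \<and> l \<le> dlt \<and> phi p l \<le> exp s} \<noteq> {}" using Lam_set_ne[OF assms(1)] by blast
  fix x assume x: "x \<in> {l. 0 \<le> l \<and> l \<le> dlt \<and> phi p l \<le> exp s}"
  show "x \<le> l"
  proof (rule ccontr)
    assume "\<not> x \<le> l"
    then have "phi p l \<le> phi p x" using x by (intro phi_mono) auto
    then show False using x assms by auto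
  qed
qed

lemma Lam_expansion: "((\<lambda>s. (Lam s - Lf s) / s^2) \<longlongrightarrow> 0) (at_right 0)"
proof (rule tendstoI)
  fix r :: real assume r: "0 < r"
  define e where "e = r / 2"
  have e: "0 < e" using r by (simp add: e_def)
  show "\<forall>\<^sub>F s in at_right 0. dist ((Lam s - Lf s) / s^2) 0 < r"
    using ev_gt[OF e] ev_lt[OF e] ev_bounds[OF e] eventually_at_right_less[of "0::real"]
  proof eventually_elim
    case (elim s)
    then have s0: "0 < s" by simp
    have es: "0 \<le> e * s^2" using e by simp
    have "Lf s - e * s^2 \<le> Lam s"
      by (intro Lam_ge) (use elim es in auto)
    moreover have "Lam s \<le> Lf s + e * s^2"
      using elim by (intro Lam_le) auto
    ultimately have "\<bar>Lam s - Lf s\<bar> \<le> e * s^2" by simp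
    then have "\<bar>Lam s - Lf s\<bar> / s^2 \<le> e" using s0 by (simp add: field_simps)
    then have q: "\<bar>Lam s - Lf s\<bar> / s^2 < r" using e_def r by linarith
    show ?case using q by (simp add: dist_real_def abs_divide)
  qed
qed

lemma Aren_limit: assumes s: "0 \<le> s" and l2: "l2 \<le> dlt" "exp s < phi p l2"
  shows "(\<lambda>m. ln (Aren p s m) / real m) \<longlonglongrightarrow> - Lam s"
proof (rule tendstoI)
  fix r :: real assume r: "0 < r"
  define e where "e = r / 3"
  have e: "0 < e" using r by (simp add: e_def)
  let ?S = "{l. 0 \<le> l \<and> l \<le> dlt \<and> phi p l \<le> exp s}"
  have "Lam s - e < Sup ?S" using e unfolding Lam_def by simp
  then obtain l1 where l1: "l1 \<in> ?S" "Lam s - e < l1"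
    using less_cSup_iff[OF _ Lam_set_bdd] Lam_set_ne[OF s] by blast
  define l where "l = (if Lam s + e \<le> dlt then Lam s + e else dlt)"
  have ll: "l \<le> Lam s + e" "l \<le> dlt" unfolding l_def by auto
  have phl: "exp s < phi p l"
  proof (cases "Lam s + e \<le> dlt")
    case True
    show ?thesis
    proof (rule ccontr)
      assume "\<not> exp s < phi p l"
      then have "l \<le> Lam s" using True Lam_nonneg[OF s] e unfolding l_def by (intro Lam_ge) auto
      then show False using True e unfolding l_def by simp
    qed
  next
    case False
    then have "l = dlt" unfolding l_def by simp
    then have "phi p l2 \<le> phi p l" using l2 by (intro phi_mono) auto
    then show ?thesis using l2 by simp
  qed
  have Ap: "0 < Aren p s m" for m using Aren_pos[OF p0 pn ps s] .
  have up: "Aren p s m \<le> exp s * exp (- l1 * real m)" for m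
    using l1 by (intro Aren_upper[OF p0 pn ps] summable_exp) auto
  obtain c where c: "0 < c" "\<And>m. c * exp (- l * real m) \<le> Aren p s m"
    using Aren_lower[OF p0 pn ps s summable_exp[OF ll(2)] phl] by blast
  have t1: "(\<lambda>m. s / real m) \<longlonglongrightarrow> 0" by (rule lim_const_over_n)
  have t2: "(\<lambda>m. ln c / real m) \<longlonglongrightarrow> 0" by (rule lim_const_over_n)
  have neg: "- e < (0::real)" using e by simp
  show "\<forall>\<^sub>F m in sequentially. dist (ln (Aren p s m) / real m) (- Lam s) < r"
    using order_tendstoD(2)[OF t1 e] order_tendstoD(1)[OF t2 neg] eventually_gt_at_top[of "0::nat"]
  proof eventually_elim
    case (elim m)
    have m0: "0 < real m" using elim by simp
    have "ln (Aren p s m) \<le> ln (exp s * exp (- l1 * real m))"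
      using up[of m] Ap[of m] by simp
    also have "\<dots> = s - l1 * real m" by (simp add: ln_mult)
    finally have u: "ln (Aren p s m) / real m \<le> s / real m - l1"
      using m0 by (simp add: field_simps)
    have "ln (c * exp (- l * real m)) \<le> ln (Aren p s m)"
      using c(2)[of m] c(1) Ap[of m] by simp
    moreover have "ln (c * exp (- l * real m)) = ln c - l * real m" using c(1) by (simp add: ln_mult)
    ultimately have lo: "ln c - l * real m \<le> ln (Aren p s m)" by linarith
    have "(ln c - l * real m) / real m \<le> ln (Aren p s m) / real m"
      using lo m0 by (intro divide_right_mono) auto
    moreover have "(ln c - l * real m) / real m = ln c / real m - l" using m0 by (simp add: field_simps)
    ultimately have "ln c / real m - l \<le> ln (Aren p s m) / real m" by simp
    then show ?case using u elim l1 ll unfolding dist_real_def e_def by (simp add: abs_less_iff)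
  qed
qed

end

lemma ev_scale:
  fixes R :: real
  assumes R: "0 < R" and ev: "eventually P (at_right 0)"
  shows "eventually (\<lambda>\<theta>. P (\<theta> * R)) (at_right 0)"
proof -
  from ev obtain b where b: "0 < b" "\<And>y. 0 < y \<Longrightarrow> y < b \<Longrightarrow> P y"
    unfolding eventually_at_right_field by auto
  have "\<forall>\<^sub>F \<theta> in at_right 0. \<theta> \<in> {0<..<b / R}"
    using b R by (intro eventually_at_right_real) simp
  then show ?thesis
  proof eventually_elim
    case (elim \<theta>)
    then have "0 < \<theta> * R" "\<theta> * R < b" using R by (auto simp: field_simps)
    then show ?case by (rule b(2))
  qed
qed

lemma tendsto_scale:
  fixes R :: real
  assumes R: "0 < R" and lim: "(f \<longlongrightarrow> (0::real)) (at_right 0)"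
  shows "((\<lambda>\<theta>. f (\<theta> * R)) \<longlongrightarrow> 0) (at_right 0)"
proof (rule tendstoI)
  fix e :: real assume "0 < e"
  from tendstoD[OF lim this] show "\<forall>\<^sub>F \<theta> in at_right 0. dist (f (\<theta> * R)) 0 < e"
    by (rule ev_scale[OF R])
qed

lemma seq_to_real:
  fixes f :: "nat \<Rightarrow> real"
  assumes lim: "(\<lambda>m. f m / real m) \<longlonglongrightarrow> L"
  shows "((\<lambda>t. f (nat (\<lceil>t\<rceil> - 1)) / t) \<longlongrightarrow> L) at_top"
proof -
  define g where "g t = nat (\<lceil>t\<rceil> - 1)" for t :: real
  have gl: "filterlim g sequentially at_top"
    unfolding filterlim_at_top
  proof
    fix Z :: nat
    show "\<forall>\<^sub>F t in at_top. Z \<le> g t"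
      using eventually_ge_at_top[of "real Z + 1"]
    proof eventually_elim
      case (elim t)
      then have "real Z + 1 \<le> of_int \<lceil>t\<rceil>" by (meson le_of_int_ceiling order_trans)
      then have "int Z \<le> \<lceil>t\<rceil> - 1" by linarith
      then show ?case unfolding g_def by linarith
    qed
  qed
  have A: "((\<lambda>t. f (g t) / real (g t)) \<longlongrightarrow> L) at_top"
    using filterlim_compose[OF lim gl] .
  have B: "((\<lambda>t. real (g t) / t) \<longlongrightarrow> 1) at_top"
  proof (rule tendsto_sandwich)
    show "\<forall>\<^sub>F t in at_top. (t - 1) / t \<le> real (g t) / t"
      using eventually_ge_at_top[of "1::real"]
    proof eventually_elim
      case (elim t)
      have "t - 1 \<le> real (g t)" unfolding g_def
        using ceiling_correct[of t] by linarith
      then show ?case using elim by (intro divide_right_mono) auto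
    qed
    show "\<forall>\<^sub>F t in at_top. real (g t) / t \<le> 1"
      using eventually_ge_at_top[of "1::real"]
    proof eventually_elim
      case (elim t)
      have "real (g t) \<le> t" unfolding g_def
        using ceiling_correct[of t] elim by linarith
      then show ?case using elim by simp
    qed
    show "((\<lambda>t::real. (t - 1) / t) \<longlongrightarrow> 1) at_top" by real_asymp
  qed simp
  have "((\<lambda>t. f (g t) / real (g t) * (real (g t) / t)) \<longlongrightarrow> L * 1) at_top"
    by (intro tendsto_mult A B)
  then have C: "((\<lambda>t. f (g t) / real (g t) * (real (g t) / t)) \<longlongrightarrow> L) at_top" by simp
  have ev: "\<forall>\<^sub>F t in at_top. f (g t) / real (g t) * (real (g t) / t) = f (g t) / t"
    using eventually_ge_at_top[of "2::real"]
  proof eventually_elim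
    case (elim t)
    have "1 \<le> real (g t)" unfolding g_def using ceiling_correct[of t] elim by linarith
    then show ?case by simp
  qed
  show ?thesis using tendsto_cong[OF ev] C unfolding g_def by simp
qed

context tailpmf begin

lemma final:
  fixes R :: real and Ef :: "real \<Rightarrow> real \<Rightarrow> real"
  assumes R: "0 < R" and EN: "\<And>\<theta> t. 0 < \<theta> \<Longrightarrow> 0 < t \<Longrightarrow> Ef \<theta> t = Aren p (\<theta> * R) (nat (\<lceil>t\<rceil> - 1))"
  shows "\<exists>Ce :: real \<Rightarrow> real.
     (\<forall>\<^sub>F \<theta> in at_right 0. ((\<lambda>t. - ln (Ef \<theta> t) / (\<theta> * t)) \<longlongrightarrow> Ce \<theta>) at_top) \<and>
     ((\<lambda>\<theta>. (Ce \<theta> - (R / mu - R^2 * sig2 / (2 * mu ^ 3) * \<theta>)) / \<theta>) \<longlongrightarrow> 0) (at_right 0)"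
proof (intro exI conjI)
  define Ce where "Ce \<theta> = Lam (\<theta> * R) / \<theta>" for \<theta>
  have ev1: "\<forall>\<^sub>F s in at_right 0. 0 < s \<and> exp s < phi p (Lf s + 1 * s^2) \<and> Lf s + 1 * s^2 < dlt"
    using eventually_at_right_less[of "0::real"] ev_gt[of 1, OF zero_less_one] ev_bounds[of 1, OF zero_less_one] by eventually_elim auto
  show "\<forall>\<^sub>F \<theta> in at_right 0. ((\<lambda>t. - ln (Ef \<theta> t) / (\<theta> * t)) \<longlongrightarrow> Lam (\<theta> * R) / \<theta>) at_top"
    using ev_scale[OF R ev1] eventually_at_right_less[of "0::real"]
  proof eventually_elim
    case (elim \<theta>)
    let ?s = "\<theta> * R"
    have "(\<lambda>m. ln (Aren p ?s m) / real m) \<longlonglongrightarrow> - Lam ?s"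
      using elim by (intro Aren_limit[of ?s "Lf ?s + 1 * ?s^2"]) auto
    from seq_to_real[OF this]
    have "((\<lambda>t. ln (Aren p ?s (nat (\<lceil>t\<rceil> - 1))) / t) \<longlongrightarrow> - Lam ?s) at_top" .
    then have lim: "((\<lambda>t. (- 1 / \<theta>) * (ln (Aren p ?s (nat (\<lceil>t\<rceil> - 1))) / t)) \<longlongrightarrow> (- 1 / \<theta>) * (- Lam ?s)) at_top"
      by (intro tendsto_mult tendsto_const)
    have ev: "\<forall>\<^sub>F t in at_top. (- 1 / \<theta>) * (ln (Aren p ?s (nat (\<lceil>t\<rceil> - 1))) / t) = - ln (Ef \<theta> t) / (\<theta> * t)"
      using eventually_gt_at_top[of "0::real"]
      by eventually_elim (use elim in \<open>simp add: EN\<close>)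
    show ?case using tendsto_cong[OF ev] lim by simp
  qed
  have eq: "(Ce \<theta> - (R / mu - R^2 * sig2 / (2 * mu ^ 3) * \<theta>)) / \<theta> = R^2 * ((Lam (\<theta> * R) - Lf (\<theta> * R)) / (\<theta> * R)^2)"
    if "0 < \<theta>" for \<theta>
    using that R mu_pos unfolding Ce_def Lf_def by (simp add: field_simps power2_eq_square power3_eq_cube)
  have "((\<lambda>\<theta>. R^2 * ((Lam (\<theta> * R) - Lf (\<theta> * R)) / (\<theta> * R)^2)) \<longlongrightarrow> R^2 * 0) (at_right 0)"
    by (intro tendsto_mult tendsto_const tendsto_scale[OF R] Lam_expansion)
  then have lim2: "((\<lambda>\<theta>. R^2 * ((Lam (\<theta> * R) - Lf (\<theta> * R)) / (\<theta> * R)^2)) \<longlongrightarrow> 0) (at_right 0)" by simp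
  have ev2: "\<forall>\<^sub>F \<theta> in at_right 0. R^2 * ((Lam (\<theta> * R) - Lf (\<theta> * R)) / (\<theta> * R)^2) = (Ce \<theta> - (R / mu - R^2 * sig2 / (2 * mu ^ 3) * \<theta>)) / \<theta>"
    using eventually_at_right_less[of "0::real"] by eventually_elim (simp only: eq)
  show "((\<lambda>\<theta>. (Lam (\<theta> * R) / \<theta> - (R / mu - R^2 * sig2 / (2 * mu ^ 3) * \<theta>)) / \<theta>) \<longlongrightarrow> 0) (at_right 0)"
    using tendsto_cong[OF ev2] lim2 unfolding Ce_def by simp
qed

end

context prob_space begin

lemma nat_rv_sums:
  assumes X: "X \<in> measurable M (count_space UNIV)"
  shows "(\<lambda>n::nat. prob {\<omega>\<in>space M. X \<omega> = n}) sums 1"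
proof -
  define A where "A n = {\<omega>\<in>space M. X \<omega> = n}" for n
  have As0: "A n \<in> sets M" for n unfolding A_def using X by measurable
  then have As: "range A \<subseteq> sets M" by auto
  have dj: "disjoint_family A" unfolding A_def disjoint_family_on_def by auto
  have U: "(\<Union>n. A n) = space M" unfolding A_def by auto
  from measure_UNION[OF As dj] have "(\<lambda>i. prob (A i)) sums prob (\<Union>n. A n)" by simp
  then have "(\<lambda>i. prob (A i)) sums 1" unfolding U by (simp add: prob_space)
  then show ?thesis unfolding A_def .
qed

lemma nat_rv_expectation:
  fixes g :: "nat \<Rightarrow> real"
  assumes X: "X \<in> measurable M (count_space UNIV)" and g: "\<And>n. 0 \<le> g n"
    and sm: "summable (\<lambda>n. g n * prob {\<omega>\<in>space M. X \<omega> = n})"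
  shows "integrable M (\<lambda>\<omega>. g (X \<omega>))"
    and "expectation (\<lambda>\<omega>. g (X \<omega>)) = (\<Sum>n. g n * prob {\<omega>\<in>space M. X \<omega> = n})"
proof -
  define A where "A n = {\<omega>\<in>space M. X \<omega> = n}" for n
  have As: "A n \<in> sets M" for n unfolding A_def using X by measurable
  have meas: "(\<lambda>\<omega>. g (X \<omega>)) \<in> borel_measurable M"
    using X by (intro measurable_compose[OF X]) simp
  have pw: "ennreal (g (X \<omega>)) = (\<Sum>n. ennreal (g n) * indicator (A n) \<omega>)" if "\<omega> \<in> space M" for \<omega>
  proof -
    have "(\<lambda>n. ennreal (g n) * indicator (A n) \<omega>) = (\<lambda>n. if n = X \<omega> then ennreal (g n) else 0)"
      using that unfolding A_def by (auto simp: indicator_def)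
    then show ?thesis using sums_single[of "X \<omega>" "\<lambda>n. ennreal (g n)"] by (simp add: sums_iff)
  qed
  have "(\<integral>\<^sup>+\<omega>. ennreal (g (X \<omega>)) \<partial>M) = (\<integral>\<^sup>+\<omega>. (\<Sum>n. ennreal (g n) * indicator (A n) \<omega>) \<partial>M)"
    by (intro nn_integral_cong) (simp add: pw)
  also have "\<dots> = (\<Sum>n. \<integral>\<^sup>+\<omega>. ennreal (g n) * indicator (A n) \<omega> \<partial>M)"
    using As by (intro nn_integral_suminf) simp
  also have "\<dots> = (\<Sum>n. ennreal (g n * prob (A n)))"
    using As by (simp add: nn_integral_cmult_indicator emeasure_eq_measure ennreal_mult g)
  also have "\<dots> = ennreal (\<Sum>n. g n * prob (A n))"
    using sm g unfolding A_def by (intro suminf_ennreal2) auto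
  finally have nn: "(\<integral>\<^sup>+\<omega>. ennreal (g (X \<omega>)) \<partial>M) = ennreal (\<Sum>n. g n * prob (A n))" .
  have "has_bochner_integral M (\<lambda>\<omega>. g (X \<omega>)) (\<Sum>n. g n * prob (A n))"
    using meas g nn sm unfolding A_def by (intro has_bochner_integral_nn_integral suminf_nonneg) auto
  then show "integrable M (\<lambda>\<omega>. g (X \<omega>))"
    and "expectation (\<lambda>\<omega>. g (X \<omega>)) = (\<Sum>n. g n * prob {\<omega>\<in>space M. X \<omega> = n})"
    unfolding A_def by (auto simp: has_bochner_integral_iff)
qed

lemma prob_zero_AE:
  assumes "{\<omega>\<in>space M. P \<omega>} \<in> events" "prob {\<omega>\<in>space M. P \<omega>} = 0"
  shows "AE \<omega> in M. \<not> P \<omega>"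
  using assms by (subst AE_iff_measurable[of "{\<omega>\<in>space M. P \<omega>}"]) (auto simp: emeasure_eq_measure)

end

lemma measurable_Greatest_nat[measurable]:
  fixes P :: "nat \<Rightarrow> 'a \<Rightarrow> bool"
  assumes [measurable]: "\<And>i. Measurable.pred M (P i)"
  shows "(\<lambda>x. GREATEST i. P i x) \<in> measurable M (count_space UNIV)"
  unfolding measurable_count_space_eq2_countable
proof safe
  fix n :: nat
  define G where "G x \<longleftrightarrow> (\<exists>k. P k x \<and> (\<forall>y. P y x \<longrightarrow> y \<le> k))" for x
  have "(\<lambda>x. GREATEST i. P i x) -` {n} \<inter> space M
      = {x\<in>space M. (G x \<and> P n x \<and> (\<forall>y. P y x \<longrightarrow> y \<le> n)) \<or> (\<not> G x \<and> (THE k::nat. False) = n)}"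
  proof (intro set_eqI iffI)
    fix x assume x: "x \<in> (\<lambda>x. GREATEST i. P i x) -` {n} \<inter> space M"
    show "x \<in> {x\<in>space M. (G x \<and> P n x \<and> (\<forall>y. P y x \<longrightarrow> y \<le> n)) \<or> (\<not> G x \<and> (THE k::nat. False) = n)}"
    proof (cases "G x")
      case True
      then obtain k where k: "P k x" "\<forall>y. P y x \<longrightarrow> y \<le> k" unfolding G_def by blast
      then have "(GREATEST i. P i x) = k" by (intro Greatest_equality) auto
      then show ?thesis using x k True by auto
    next
      case False
      then have "\<And>k. \<not> (P k x \<and> (\<forall>y. P y x \<longrightarrow> y \<le> k))" unfolding G_def by blast
      then have "(\<lambda>k. P k x \<and> (\<forall>y. P y x \<longrightarrow> y \<le> k)) = (\<lambda>k. False)" unfolding fun_eq_iff by blast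
      then have "(GREATEST i. P i x) = (THE k::nat. False)" unfolding Greatest_def by simp
      then show ?thesis using x False by auto
    qed
  next
    fix x assume x: "x \<in> {x\<in>space M. (G x \<and> P n x \<and> (\<forall>y. P y x \<longrightarrow> y \<le> n)) \<or> (\<not> G x \<and> (THE k::nat. False) = n)}"
    show "x \<in> (\<lambda>x. GREATEST i. P i x) -` {n} \<inter> space M"
    proof (cases "G x")
      case True
      then have "P n x \<and> (\<forall>y. P y x \<longrightarrow> y \<le> n)" using x by auto
      then have "(GREATEST i. P i x) = n" by (intro Greatest_equality) auto
      then show ?thesis using x by auto
    next
      case False
      then have "\<And>k. \<not> (P k x \<and> (\<forall>y. P y x \<longrightarrow> y \<le> k))" unfolding G_def by blast
      then have "(\<lambda>k. P k x \<and> (\<forall>y. P y x \<longrightarrow> y \<le> k)) = (\<lambda>k. False)" unfolding fun_eq_iff by blast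
      then have "(GREATEST i. P i x) = (THE k::nat. False)" unfolding Greatest_def by simp
      then show ?thesis using x False by auto
    qed
  qed
  also have "\<dots> \<in> sets M" unfolding G_def by measurable
  finally show "(\<lambda>x. GREATEST i. P i x) -` {n} \<inter> space M \<in> sets M" .
qed simp

context prob_space begin

lemma renewal_expectation:
  fixes Tl :: "nat \<Rightarrow> 'a \<Rightarrow> nat" and p :: "nat \<Rightarrow> real"
  assumes Tlm: "\<And>l. 1 \<le> l \<Longrightarrow> Tl l \<in> measurable M (count_space UNIV)"
    and indep: "indep_vars (\<lambda>_. count_space UNIV) Tl {1..}"
    and pTl: "\<And>l n. 1 \<le> l \<Longrightarrow> prob {\<omega>\<in>space M. Tl l \<omega> = n} = p n"
    and p0: "p 0 = 0" and t: "0 < t"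
  shows "expectation (\<lambda>\<omega>. exp (- s * real (renewal_count Tl t \<omega>))) = Aren p s (nat (\<lceil>t\<rceil> - 1))"
proof -
  define S where "S k \<omega> = (\<Sum>l\<in>{1..k}. Tl l \<omega>)" for k \<omega>
  define F where "F k m = prob {\<omega>\<in>space M. S k \<omega> \<le> m}" for k m
  define m where "m = nat (\<lceil>t\<rceil> - 1)"
  define X where "X l \<omega> = real (Tl l \<omega>)" for l \<omega>
  have Xm[measurable]: "X l \<in> borel_measurable M" if "1 \<le> l" for l
    unfolding X_def using Tlm[OF that] by measurable
  have Sreal: "real (S k \<omega>) = (\<Sum>l\<in>{1..k}. X l \<omega>)" for k \<omega>
    unfolding S_def X_def by simp
  have Sle: "(S k \<omega> \<le> j) = ((\<Sum>l\<in>{1..k}. X l \<omega>) \<le> real j)" for k j \<omega>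
    by (simp only: Sreal[symmetric] of_nat_le_iff)
  have Sset: "{\<omega>\<in>space M. S k \<omega> \<le> j} = {\<omega>\<in>space M. (\<Sum>l\<in>{1..k}. X l \<omega>) \<le> real j}" for k j
    by (simp only: Sle)
  have Sev: "{\<omega>\<in>space M. S k \<omega> \<le> j} \<in> events" for k j
  proof -
    have "(\<lambda>\<omega>. \<Sum>l\<in>{1..k}. X l \<omega>) \<in> borel_measurable M"
      by (intro borel_measurable_sum) auto
    then show ?thesis unfolding Sset by measurable
  qed
  have Tev: "{\<omega>\<in>space M. Tl l \<omega> = j} \<in> events" if "1 \<le> l" for l j
    using Tlm[OF that] by measurable
  have indX: "indep_vars (\<lambda>_. borel) X {1..}"
    unfolding X_def by (rule indep_vars_compose2[OF indep]) simp
  have indep_prob: "prob {\<omega>\<in>space M. Tl (Suc k) \<omega> = j \<and> S k \<omega> \<le> i} = p j * F k i" for k j i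
  proof -
    have "indep_vars (\<lambda>_. borel) X (insert (Suc k) {1..k})"
      by (rule indep_vars_subset[OF indX]) auto
    from indep_vars_sum[OF _ _ this] have iv: "indep_var borel (X (Suc k)) borel (\<lambda>\<omega>. \<Sum>l\<in>{1..k}. X l \<omega>)"
      by simp
    have "\<P>(\<omega> in M. X (Suc k) \<omega> \<in> {real j} \<and> (\<Sum>l\<in>{1..k}. X l \<omega>) \<in> {..real i})
        = \<P>(\<omega> in M. X (Suc k) \<omega> \<in> {real j}) * \<P>(\<omega> in M. (\<Sum>l\<in>{1..k}. X l \<omega>) \<in> {..real i})"
      by (rule prob_indep_random_variable[OF iv]) auto
    moreover have "{\<omega>\<in>space M. X (Suc k) \<omega> \<in> {real j} \<and> (\<Sum>l\<in>{1..k}. X l \<omega>) \<in> {..real i}}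
        = {\<omega>\<in>space M. Tl (Suc k) \<omega> = j \<and> S k \<omega> \<le> i}"
      by (auto simp: X_def Sle)
    moreover have "{\<omega>\<in>space M. X (Suc k) \<omega> \<in> {real j}} = {\<omega>\<in>space M. Tl (Suc k) \<omega> = j}"
      by (auto simp: X_def)
    moreover have "{\<omega>\<in>space M. (\<Sum>l\<in>{1..k}. X l \<omega>) \<in> {..real i}} = {\<omega>\<in>space M. S k \<omega> \<le> i}"
      by (auto simp: Sle)
    ultimately show ?thesis using pTl[of "Suc k" j] unfolding F_def by simp
  qed
  have F0: "F 0 i = 1" for i unfolding F_def S_def by (simp add: prob_space)
  have Frec: "F (Suc k) i = (\<Sum>j\<le>i. p j * F k (i - j))" for k i
  proof -
    define B where "B j = {\<omega>\<in>space M. Tl (Suc k) \<omega> = j \<and> S k \<omega> \<le> i - j}" for j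
    have U: "{\<omega>\<in>space M. S (Suc k) \<omega> \<le> i} = (\<Union>j\<in>{..i}. B j)"
      unfolding B_def S_def by auto
    have Bev: "B j \<in> events" for j
      unfolding B_def using Tev[of "Suc k" j] Sev[of k "i - j"]
      by (simp add: Collect_conj_eq[symmetric] sets.Int Int_def)
    have "F (Suc k) i = prob (\<Union>j\<in>{..i}. B j)" unfolding F_def U ..
    also have "\<dots> = (\<Sum>j\<le>i. prob (B j))"
      using Bev by (intro measure_finite_Union) (auto simp: disjoint_family_on_def B_def)
    also have "\<dots> = (\<Sum>j\<le>i. p j * F k (i - j))"
      unfolding B_def by (simp add: indep_prob)
    finally show ?thesis .
  qed
  have FFc: "F k i = Fc p k i" for k i
  proof (induction k arbitrary: i)
    case 0 then show ?case by (simp add: F0)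
  next
    case (Suc k) then show ?case by (simp add: Frec)
  qed
  have G: "AE \<omega> in M. \<forall>l. 1 \<le> l \<longrightarrow> Tl l \<omega> \<noteq> 0"
  proof (subst AE_all_countable, intro allI)
    fix l :: nat
    show "AE \<omega> in M. 1 \<le> l \<longrightarrow> Tl l \<omega> \<noteq> 0"
    proof (cases "1 \<le> l")
      case True
      have "AE \<omega> in M. \<not> Tl l \<omega> = 0"
        using Tev[OF True, of 0] pTl[OF True, of 0] p0 by (intro prob_zero_AE) auto
      then show ?thesis by simp
    next
      case False then show ?thesis by simp
    qed
  qed
  define N where "N \<omega> = renewal_count Tl t \<omega>" for \<omega>
  have Smono: "S k \<omega> \<le> S k' \<omega>" if "k \<le> k'" for k k' \<omega>
    unfolding S_def using that by (intro sum_mono2) auto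
  have Sge: "k \<le> S k \<omega>" if "\<forall>l. 1 \<le> l \<longrightarrow> Tl l \<omega> \<noteq> 0" for k \<omega>
  proof -
    have "k = (\<Sum>l\<in>{1..k}. (1::nat))" by simp
    also have "\<dots> \<le> S k \<omega>" unfolding S_def using that by (intro sum_mono) (auto simp: Suc_le_eq)
    finally show ?thesis .
  qed
  have ct: "0 < \<lceil>t\<rceil>" using t by simp
  have tm: "real n < t \<longleftrightarrow> n \<le> m" for n
  proof -
    have "real n < t \<longleftrightarrow> int n < \<lceil>t\<rceil>" using less_ceiling_iff[of "int n" t] by simp
    also have "\<dots> \<longleftrightarrow> n \<le> m" unfolding m_def using ct by (simp add: le_nat_iff)
    finally show ?thesis .
  qed
  have Nchar: "N \<omega> \<le> m \<and> S (N \<omega>) \<omega> \<le> m \<and> \<not> S (Suc (N \<omega>)) \<omega> \<le> m"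
    if G\<omega>: "\<forall>l. 1 \<le> l \<longrightarrow> Tl l \<omega> \<noteq> 0" for \<omega>
  proof -
    have N_eq: "N \<omega> = (GREATEST k. S k \<omega> \<le> m)"
      unfolding N_def renewal_count_def S_def[symmetric] tm ..
    have P0: "S 0 \<omega> \<le> m" unfolding S_def by simp
    have bnd: "\<And>y. S y \<omega> \<le> m \<Longrightarrow> y \<le> m" using Sge[OF G\<omega>] order_trans by blast
    have A: "S (N \<omega>) \<omega> \<le> m" unfolding N_eq by (rule GreatestI_nat[of "\<lambda>k. S k \<omega> \<le> m", OF P0 bnd])
    have B: "\<not> S (Suc (N \<omega>)) \<omega> \<le> m"
    proof
      assume "S (Suc (N \<omega>)) \<omega> \<le> m"
      from Greatest_le_nat[of "\<lambda>k. S k \<omega> \<le> m", OF this bnd] show False unfolding N_eq[symmetric] by simp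
    qed
    show ?thesis using A B bnd[OF A] by simp
  qed
  have pw: "exp (- s * real (N \<omega>)) = (\<Sum>k\<le>m. exp (- s * real k) *
      (indicator {\<omega>\<in>space M. S k \<omega> \<le> m} \<omega> - indicator {\<omega>\<in>space M. S (Suc k) \<omega> \<le> m} \<omega>))"
    if \<omega>: "\<omega> \<in> space M" and G\<omega>: "\<forall>l. 1 \<le> l \<longrightarrow> Tl l \<omega> \<noteq> 0" for \<omega>
  proof -
    note NC = Nchar[OF G\<omega>]
    have trm: "exp (- s * real k) * (indicator {\<omega>\<in>space M. S k \<omega> \<le> m} \<omega> - indicator {\<omega>\<in>space M. S (Suc k) \<omega> \<le> m} \<omega>)
        = (if k = N \<omega> then exp (- s * real k) else 0)" for k
    proof (cases "k = N \<omega>")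
      case True then show ?thesis using NC \<omega> by (simp add: indicator_def)
    next
      case False
      show ?thesis
      proof (cases "k < N \<omega>")
        case True
        then have "S (Suc k) \<omega> \<le> m" "S k \<omega> \<le> m"
          using Smono[of "Suc k" "N \<omega>" \<omega>] Smono[of k "N \<omega>" \<omega>] NC by auto
        then show ?thesis using False \<omega> by (simp add: indicator_def)
      next
        case False2: False
        then have "Suc (N \<omega>) \<le> k" using False by simp
        then have "\<not> S k \<omega> \<le> m" "\<not> S (Suc k) \<omega> \<le> m"
          using Smono[of "Suc (N \<omega>)" k \<omega>] Smono[of "Suc (N \<omega>)" "Suc k" \<omega>] NC by auto
        then show ?thesis using False \<omega> by (simp add: indicator_def)
      qed
    qed
    have "(\<Sum>k\<le>m. exp (- s * real k) *
      (indicator {\<omega>\<in>space M. S k \<omega> \<le> m} \<omega> - indicator {\<omega>\<in>space M. S (Suc k) \<omega> \<le> m} \<omega>))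
      = (\<Sum>k\<le>m. if k = N \<omega> then exp (- s * real k) else 0)" by (simp only: trm)
    also have "\<dots> = exp (- s * real (N \<omega>))" using NC by (simp add: sum.delta')
    finally show ?thesis by simp
  qed
  have Nm: "N \<in> measurable M (count_space UNIV)"
  proof -
    have pr: "Measurable.pred M (\<lambda>\<omega>. real (\<Sum>l = 1..k. Tl l \<omega>) < t)" for k
    proof -
      have eq: "(\<lambda>\<omega>. real (\<Sum>l = 1..k. Tl l \<omega>)) = (\<lambda>\<omega>. \<Sum>l\<in>{1..k}. X l \<omega>)"
        by (simp add: X_def)
      have fm[measurable]: "(\<lambda>\<omega>. real (\<Sum>l = 1..k. Tl l \<omega>)) \<in> borel_measurable M"
        unfolding eq by (intro borel_measurable_sum) auto
      show ?thesis by measurable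
    qed
    show ?thesis unfolding N_def renewal_count_def by (rule measurable_Greatest_nat[OF pr])
  qed
  have lhs_m: "(\<lambda>\<omega>. exp (- s * real (N \<omega>))) \<in> borel_measurable M"
    by (rule measurable_compose[OF Nm]) simp
  have ind_int: "integrable M (indicator {\<omega>\<in>space M. S k \<omega> \<le> j} :: 'a \<Rightarrow> real)" for k j
    using Sev[of k j] by (simp add: integrable_indicator_iff emeasure_eq_measure)
  have "expectation (\<lambda>\<omega>. exp (- s * real (N \<omega>)))
      = expectation (\<lambda>\<omega>. \<Sum>k\<le>m. exp (- s * real k) *
          (indicator {\<omega>\<in>space M. S k \<omega> \<le> m} \<omega> - indicator {\<omega>\<in>space M. S (Suc k) \<omega> \<le> m} \<omega>))"
  proof (rule integral_cong_AE)
    show "(\<lambda>\<omega>. exp (- s * real (N \<omega>))) \<in> borel_measurable M" by (rule lhs_m)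
    show "(\<lambda>\<omega>. \<Sum>k\<le>m. exp (- s * real k) *
          (indicator {\<omega>\<in>space M. S k \<omega> \<le> m} \<omega> - indicator {\<omega>\<in>space M. S (Suc k) \<omega> \<le> m} \<omega>)) \<in> borel_measurable M"
      using Sev by measurable
    show "AE \<omega> in M. exp (- s * real (N \<omega>)) = (\<Sum>k\<le>m. exp (- s * real k) *
          (indicator {\<omega>\<in>space M. S k \<omega> \<le> m} \<omega> - indicator {\<omega>\<in>space M. S (Suc k) \<omega> \<le> m} \<omega>))"
      using G AE_space by eventually_elim (rule pw)
  qed
  also have "\<dots> = (\<Sum>k\<le>m. exp (- s * real k) * (F k m - F (Suc k) m))"
    using ind_int Sev unfolding F_def by (simp add: integral_sum integral_diff)
  also have "\<dots> = Aren p s m" unfolding Aren_def FFc ..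
  finally show ?thesis unfolding N_def m_def .
qed

end

lemma blockcap_nonneg: "0 < SNR \<Longrightarrow> 0 \<le> x \<Longrightarrow> 0 \<le> blockcap SNR x"
  unfolding blockcap_def by (simp add: add_pos_nonneg)

lemma blockcap_measurable[measurable]: "blockcap SNR \<in> borel_measurable borel"
  unfolding blockcap_def by measurable

context prob_space begin

lemma harq_tail:
  fixes z :: "nat \<Rightarrow> 'a \<Rightarrow> real"
  assumes SNR: "SNR > 0" and R: "R > 0"
   and z_indep: "indep_vars (\<lambda>_. borel) z {1..}"
   and z_ident: "\<And>i. i \<ge> 1 \<Longrightarrow> distr M borel (z i) = distr M borel (z 1)"
   and z_nonneg: "\<And>i. i \<ge> 1 \<Longrightarrow> AE \<omega> in M. z i \<omega> \<ge> 0"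
   and T_finite: "AE \<omega> in M. \<exists>m\<ge>1. R < (\<Sum>i=1..m. blockcap SNR (z i \<omega>))"
  shows "\<exists>\<rho>. 0 \<le> \<rho> \<and> \<rho> < 1 \<and> (\<forall>m\<ge>1. prob {\<omega>\<in>space M. m < harq_time SNR R z \<omega>} \<le> exp R * \<rho> ^ m)"
proof -
  have zm[measurable]: "z i \<in> borel_measurable M" if "1 \<le> i" for i
    using z_indep that unfolding indep_vars_def by auto
  define g where "g x = exp (- blockcap SNR x)" for x
  have gm[measurable]: "g \<in> borel_measurable borel" unfolding g_def by measurable
  define Y where "Y i \<omega> = g (z i \<omega>)" for i \<omega>
  have Ym[measurable]: "Y i \<in> borel_measurable M" if "1 \<le> i" for i
    unfolding Y_def using that by measurable
  have AEz: "AE \<omega> in M. \<forall>i. 1 \<le> i \<longrightarrow> 0 \<le> z i \<omega>"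
    using z_nonneg by (subst AE_all_countable) (auto intro: AE_I2)
  have Ybd: "AE \<omega> in M. 0 < Y i \<omega> \<and> Y i \<omega> \<le> 1" if "1 \<le> i" for i
    using AEz
  proof eventually_elim
    case (elim \<omega>)
    then have "0 \<le> blockcap SNR (z i \<omega>)" using blockcap_nonneg[OF SNR] that by auto
    then show ?case unfolding Y_def g_def by simp
  qed
  have Yint: "integrable M (Y i)" if "1 \<le> i" for i
  proof -
    have "AE \<omega> in M. norm (Y i \<omega>) \<le> 1" using Ybd[OF that] by eventually_elim auto
    then show ?thesis using Ym[OF that] by (rule integrable_const_bound)
  qed
  have EY: "expectation (Y i) = expectation (Y 1)" if "1 \<le> i" for i
  proof -
    have "expectation (Y i) = integral\<^sup>L (distr M borel (z i)) g"
      unfolding Y_def using that by (subst integral_distr) auto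
    also have "\<dots> = integral\<^sup>L (distr M borel (z 1)) g" using z_ident[OF that] by simp
    also have "\<dots> = expectation (Y 1)" unfolding Y_def by (subst integral_distr) auto
    finally show ?thesis .
  qed
  define \<rho> where "\<rho> = expectation (Y 1)"
  have rho0: "0 \<le> \<rho>"
  proof -
    have "AE \<omega> in M. 0 \<le> Y 1 \<omega>" using Ybd[of 1, OF order_refl] by eventually_elim auto
    then show ?thesis unfolding \<rho>_def by (rule integral_nonneg_AE)
  qed
  have rho1: "\<rho> < 1"
  proof (rule ccontr)
    assume "\<not> \<rho> < 1"
    have Y1: "AE \<omega> in M. Y i \<omega> = 1" if i: "1 \<le> i" for i
    proof -
      have int: "integrable M (\<lambda>\<omega>. 1 - Y i \<omega>)" using Yint[OF i] by simp
      have nn: "AE \<omega> in M. 0 \<le> 1 - Y i \<omega>" using Ybd[OF i] by eventually_elim auto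
      have "expectation (\<lambda>\<omega>. 1 - Y i \<omega>) = 1 - \<rho>"
        using Yint[OF i] EY[OF i] by (simp add: prob_space \<rho>_def)
      moreover have "expectation (\<lambda>\<omega>. 1 - Y i \<omega>) \<ge> 0" using nn by (intro integral_nonneg_AE)
      ultimately have "expectation (\<lambda>\<omega>. 1 - Y i \<omega>) = 0" using \<open>\<not> \<rho> < 1\<close> by simp
      then have "AE \<omega> in M. 1 - Y i \<omega> = 0" using integral_nonneg_eq_0_iff_AE[OF int nn] by simp
      then show ?thesis by eventually_elim simp
    qed
    have "AE \<omega> in M. \<forall>i. 1 \<le> i \<longrightarrow> Y i \<omega> = 1"
      using Y1 by (subst AE_all_countable) (auto intro: AE_I2)
    then have "AE \<omega> in M. False" using T_finite
    proof eventually_elim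
      case (elim \<omega>)
      then obtain m where m: "1 \<le> m" "R < (\<Sum>i=1..m. blockcap SNR (z i \<omega>))" by blast
      have "blockcap SNR (z i \<omega>) = 0" if "i \<in> {1..m}" for i
        using elim that unfolding Y_def g_def by auto
      then have "(\<Sum>i=1..m. blockcap SNR (z i \<omega>)) = 0" by simp
      then show False using m R by simp
    qed
    then show False by (simp add: AE_False)
  qed
  have main: "prob {\<omega>\<in>space M. m < harq_time SNR R z \<omega>} \<le> exp R * \<rho> ^ m" if m: "1 \<le> m" for m
  proof -
    have indY: "indep_vars (\<lambda>_. borel) Y {1..m}"
      unfolding Y_def by (rule indep_vars_subset[OF indep_vars_compose2[OF z_indep]]) auto
    have EP: "expectation (\<lambda>\<omega>. \<Prod>i\<in>{1..m}. Y i \<omega>) = \<rho> ^ m"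
    proof -
      have "expectation (\<lambda>\<omega>. \<Prod>i\<in>{1..m}. Y i \<omega>) = (\<Prod>i\<in>{1..m}. expectation (Y i))"
        using indep_vars_lebesgue_integral[OF _ indY] Yint by simp
      also have "\<dots> = (\<Prod>i\<in>{1..m}. \<rho>)" unfolding \<rho>_def by (intro prod.cong refl EY) simp
      finally show ?thesis by simp
    qed
    have PI: "integrable M (\<lambda>\<omega>. \<Prod>i\<in>{1..m}. Y i \<omega>)"
      using indep_vars_integrable[OF _ indY] Yint by simp
    have Pm[measurable]: "(\<lambda>\<omega>. \<Prod>i\<in>{1..m}. Y i \<omega>) \<in> borel_measurable M"
      by (intro borel_measurable_prod) auto
    have PAE: "AE \<omega> in M. 0 \<le> (\<Prod>i\<in>{1..m}. Y i \<omega>)"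
      using AEz
    proof eventually_elim
      case (elim \<omega>)
      then show ?case unfolding Y_def g_def by (intro prod_nonneg) auto
    qed
    have Bev: "{\<omega>\<in>space M. exp (- R) \<le> (\<Prod>i\<in>{1..m}. Y i \<omega>)} \<in> events" by measurable
    have "prob {\<omega>\<in>space M. m < harq_time SNR R z \<omega>} \<le> prob {\<omega>\<in>space M. exp (- R) \<le> (\<Prod>i\<in>{1..m}. Y i \<omega>)}"
    proof (rule finite_measure_mono_AE[OF _ Bev])
      show "AE \<omega> in M. \<omega> \<in> {\<omega>\<in>space M. m < harq_time SNR R z \<omega>} \<longrightarrow> \<omega> \<in> {\<omega>\<in>space M. exp (- R) \<le> (\<Prod>i\<in>{1..m}. Y i \<omega>)}"
        using AE_space
      proof eventually_elim
        case (elim \<omega>)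
        show ?case
        proof
          assume "\<omega> \<in> {\<omega>\<in>space M. m < harq_time SNR R z \<omega>}"
          then have "m < (LEAST M. M \<ge> 1 \<and> R < (\<Sum>i=1..M. blockcap SNR (z i \<omega>)))"
            unfolding harq_time_def by simp
          from not_less_Least[OF this] m have le: "(\<Sum>i=1..m. blockcap SNR (z i \<omega>)) \<le> R" by simp
          have "(\<Prod>i\<in>{1..m}. Y i \<omega>) = exp (- (\<Sum>i=1..m. blockcap SNR (z i \<omega>)))"
            unfolding Y_def g_def by (simp add: exp_sum sum_negf[symmetric])
          also have "\<dots> \<ge> exp (- R)" using le by simp
          finally show "\<omega> \<in> {\<omega>\<in>space M. exp (- R) \<le> (\<Prod>i\<in>{1..m}. Y i \<omega>)}" using elim by simp
        qed
      qed
    qed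
    also have "\<dots> \<le> expectation (\<lambda>\<omega>. \<Prod>i\<in>{1..m}. Y i \<omega>) / exp (- R)"
      by (rule integral_Markov_inequality_measure[OF PI _ PAE]) auto
    also have "\<dots> = exp R * \<rho> ^ m" unfolding EP by (simp add: exp_minus field_simps)
    finally show ?thesis .
  qed
  show ?thesis using rho0 rho1 main by blast
qed

end

theorem theorem1:
  fixes M :: "'a measure" and SNR R :: real
    and z :: "nat \<Rightarrow> 'a \<Rightarrow> real" and Tl :: "nat \<Rightarrow> 'a \<Rightarrow> nat"
  assumes P: "prob_space M"
    and SNR: "SNR > 0" and R: "R > 0"
    and z_indep: "prob_space.indep_vars M (\<lambda>_. borel) z {1..}"
    and z_ident: "\<And>i. i \<ge> 1 \<Longrightarrow> distr M borel (z i) = distr M borel (z 1)"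
    and z_nonneg: "\<And>i. i \<ge> 1 \<Longrightarrow> AE \<omega> in M. z i \<omega> \<ge> 0"
    and T_finite: "AE \<omega> in M. \<exists>m\<ge>1. R < (\<Sum>i=1..m. blockcap SNR (z i \<omega>))"
    and Tl_indep: "prob_space.indep_vars M (\<lambda>_. count_space UNIV) Tl {1..}"
    and Tl_ident: "\<And>l. l \<ge> 1 \<Longrightarrow>
        distr M (count_space UNIV) (Tl l) = distr M (count_space UNIV) (harq_time SNR R z)"
  shows "\<exists>Ce :: real \<Rightarrow> real.
     (\<forall>\<^sub>F \<theta> in at_right 0.
        ((\<lambda>t. - ln (prob_space.expectation M
                        (\<lambda>\<omega>. exp (- \<theta> * R * real (renewal_count Tl t \<omega>)))) / (\<theta> * t))
          \<longlongrightarrow> Ce \<theta>) at_top) \<and>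
     ((\<lambda>\<theta>. (Ce \<theta> - (R / prob_space.expectation M (\<lambda>\<omega>. real (harq_time SNR R z \<omega>))
        - R\<^sup>2 * prob_space.variance M (\<lambda>\<omega>. real (harq_time SNR R z \<omega>))
          / (2 * (prob_space.expectation M (\<lambda>\<omega>. real (harq_time SNR R z \<omega>))) ^ 3) * \<theta>)) / \<theta>)
      \<longlongrightarrow> 0) (at_right 0)"
proof -
  interpret P: prob_space M by (rule P)
  define T where "T = harq_time SNR R z"
  have zm[measurable]: "z i \<in> borel_measurable M" if "1 \<le> i" for i
    using z_indep that unfolding P.indep_vars_def by auto
  have Tlm: "Tl l \<in> measurable M (count_space UNIV)" if "1 \<le> l" for l
    using Tl_indep that unfolding P.indep_vars_def by auto
  have Tm: "T \<in> measurable M (count_space UNIV)"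
  proof -
    have sm: "(\<lambda>\<omega>. \<Sum>j\<in>{1..i}. blockcap SNR (z j \<omega>)) \<in> borel_measurable M" for i
      by (intro borel_measurable_sum) auto
    have "Measurable.pred M (\<lambda>\<omega>. 1 \<le> i \<and> R < (\<Sum>j = 1..i. blockcap SNR (z j \<omega>)))" for i
      using sm[of i] by measurable
    then show ?thesis unfolding T_def harq_time_def by (rule measurable_Least)
  qed
  define p where "p n = P.prob {\<omega>\<in>space M. T \<omega> = n}" for n
  have pTl: "P.prob {\<omega>\<in>space M. Tl l \<omega> = n} = p n" if l: "1 \<le> l" for l n
  proof -
    have "P.prob {\<omega>\<in>space M. Tl l \<omega> = n} = measure (distr M (count_space UNIV) (Tl l)) {n}"
      using Tlm[OF l] by (subst measure_distr) (auto intro!: arg_cong[where f="measure M"])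
    also have "\<dots> = measure (distr M (count_space UNIV) T) {n}"
      using Tl_ident[OF l] unfolding T_def by simp
    also have "\<dots> = p n"
      using Tm unfolding p_def by (subst measure_distr) (auto intro!: arg_cong[where f="measure M"])
    finally show ?thesis .
  qed
  have ps: "p sums 1" unfolding p_def by (rule P.nat_rv_sums[OF Tm])
  have pn: "0 \<le> p n" for n unfolding p_def by simp
  have Tge1: "AE \<omega> in M. 1 \<le> T \<omega>"
    using T_finite
  proof eventually_elim
    case (elim \<omega>)
    then show ?case unfolding T_def harq_time_def by (rule LeastI2_ex) auto
  qed
  have p0: "p 0 = 0"
  proof -
    have ev: "{\<omega>\<in>space M. T \<omega> = 0} \<in> P.events" using Tm by measurable
    have "{x\<in>space M. \<not> 1 \<le> T x} = {\<omega>\<in>space M. T \<omega> = 0}" by auto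
    from AE_iff_measurable[OF ev this] Tge1 have "emeasure M {\<omega>\<in>space M. T \<omega> = 0} = 0" by simp
    then show ?thesis unfolding p_def by (simp add: P.emeasure_eq_measure)
  qed
  obtain \<rho>0 where r0: "0 \<le> \<rho>0" "\<rho>0 < 1"
    and tl: "\<And>m. 1 \<le> m \<Longrightarrow> P.prob {\<omega>\<in>space M. m < T \<omega>} \<le> exp R * \<rho>0 ^ m"
    using P.harq_tail[OF SNR R z_indep z_ident z_nonneg T_finite] unfolding T_def by blast
  define \<rho> where "\<rho> = max \<rho>0 (1/2)"
  have rho: "0 < \<rho>" "\<rho> < 1" "\<rho>0 \<le> \<rho>" using r0 unfolding \<rho>_def by auto
  define C where "C = exp R / \<rho>"
  have ptail: "p n \<le> C * \<rho> ^ n" for n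
  proof (cases "n \<le> 1")
    case True
    then consider "n = 0" | "n = 1" by linarith
    then show ?thesis
    proof cases
      case 1 then show ?thesis using p0 rho unfolding C_def by simp
    next
      case 2
      have "p 1 \<le> 1" unfolding p_def by simp
      also have "1 \<le> exp R" using R by simp
      finally show ?thesis using 2 rho unfolding C_def by simp
    qed
  next
    case False
    then have n1: "1 \<le> n - 1" by simp
    have "p n \<le> P.prob {\<omega>\<in>space M. n - 1 < T \<omega>}"
      unfolding p_def using Tm False by (intro P.finite_measure_mono) auto
    also have "\<dots> \<le> exp R * \<rho>0 ^ (n - 1)" by (rule tl[OF n1])
    also have "\<dots> \<le> exp R * \<rho> ^ (n - 1)" using rho r0 by (intro mult_left_mono power_mono) auto
    also have "\<dots> = C * \<rho> ^ n" using False rho unfolding C_def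
      by (simp add: power_eq_if field_simps)
    finally show ?thesis .
  qed
  interpret Q: tailpmf p C \<rho>
    using p0 pn ps rho ptail by unfold_locales auto
  have sm1: "summable (\<lambda>n. real n * p n)" using Q.summable_n1 by (simp add: mult.commute)
  have sm2: "summable (\<lambda>n. (real n)^2 * p n)" using Q.summable_nk[of 2] by (simp add: mult.commute)
  have ET: "P.expectation (\<lambda>\<omega>. real (T \<omega>)) = Q.mu" and IT: "integrable M (\<lambda>\<omega>. real (T \<omega>))"
    using P.nat_rv_expectation[OF Tm, of real] sm1 unfolding p_def Q.mu_def[unfolded p_def]
    by (simp_all add: mult.commute)
  have ET2: "P.expectation (\<lambda>\<omega>. (real (T \<omega>))^2) = Q.mu2" and IT2: "integrable M (\<lambda>\<omega>. (real (T \<omega>))^2)"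
    using P.nat_rv_expectation[OF Tm, of "\<lambda>n. (real n)^2"] sm2 unfolding p_def Q.mu2_def[unfolded p_def]
    by (simp_all add: mult.commute)
  have VT: "P.variance (\<lambda>\<omega>. real (T \<omega>)) = Q.sig2"
    using P.variance_eq[OF IT IT2] ET ET2 unfolding Q.sig2_def by simp
  have EN: "P.expectation (\<lambda>\<omega>. exp (- \<theta> * R * real (renewal_count Tl t \<omega>))) = Aren p (\<theta> * R) (nat (\<lceil>t\<rceil> - 1))"
    if "0 < \<theta>" "0 < t" for \<theta> t
  proof -
    have "(\<lambda>\<omega>. exp (- \<theta> * R * real (renewal_count Tl t \<omega>))) = (\<lambda>\<omega>. exp (- (\<theta> * R) * real (renewal_count Tl t \<omega>)))"
      by simp
    then show ?thesis using P.renewal_expectation[OF Tlm Tl_indep pTl p0 \<open>0 < t\<close>, of "\<theta> * R"] by simp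
  qed
  note fin = Q.final[of R "\<lambda>\<theta> t. P.expectation (\<lambda>\<omega>. exp (- \<theta> * R * real (renewal_count Tl t \<omega>)))", OF R EN]
  have VT2: "P.expectation (\<lambda>x. (real (T x) - Q.mu)\<^sup>2) = Q.sig2" using VT ET by simp
  show ?thesis unfolding T_def[symmetric] ET VT2 by (rule fin)
qed

end
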